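(* For all $s\in\mathcal{Q}$ one has $F_s(J_s)\subset\mathbb{Z}^{>0}$. If moreover $s\notin\{0,\infty\}$ and $s_0,s_1$ are the parents of $s$, then pointwise on $\mathbb{Z}^2$ $$1\!\!1_{J_s}\cdot\sup\left\{1\!\!1_{\{P^{s_0}_0\}}*F_{s_1},\ 1\!\!1_{\{P^{s_1}_0\}}*F_{s_0},\ 1\!\!1_{\{Q^{s_0}_0\}}*F_{s_1},\ 1\!\!1_{\{Q^{s_1}_0\}}*F_{s_0}\right\}\leq F_s .$$
   Context: $\mathcal{Q}=\mathbb{Q}^{\geq0}\cup\{\infty\}$; each $\sigma\in\mathcal{Q}$ is written uniquely $\sigma=q/p$ with $p,q\in\mathbb{N}$ coprime ($\infty=1/0$). For such $\sigma$: $J_\sigma=\{(\alpha,\beta)\in\mathbb{Z}^2:\ \alpha\equiv q,\ \beta\equiv p\pmod2;\ \alpha\geq-q;\ \beta\geq-p;\ \alpha+\beta\leq p+q-2;\ p\alpha+q\beta\geq0\}$, $P^\sigma_i=(q+2i,-p)$, $Q^\sigma_j=(-q,p+2j)$. Parents: for $\sigma\in\mathcal{Q}\smallsetminus\{0,1,\infty\}$, let $L_\sigma$ be the hyperbolic geodesic in the upper half-plane from $\sigma$ to $\sqrt{-1}$; the parents of $\sigma$ are the endpoints of the first edge of the Farey triangulation (ideal triangles with vertices $\frac{q_0}{p_0},\frac{q_0+q_1}{p_0+p_1},\frac{q_1}{p_1}$, $q_0p_1-q_1p_0=\pm1$) crossed by $L_\sigma$, closest to $\sigma$; the parents of $1$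 are $0$ and $\infty$. For $\sigma\notin\{0,1,\infty\}$ the parents are labelled $\sigma_0,\sigma_1$ so that the parents of $\sigma_1$ are $\sigma_0$ and another point $\sigma'\in\mathcal{Q}$. Convolution of finitely supported functions $\mathbb{Z}^2\to\mathbb{Z}$: $F*G(u)=\sum_{x+y=u}F(x)G(y)$ (so $1\!\!1_{\{\xi\}}*F(u)=F(u-\xi)$); $1\!\!1_U$ is the indicator of $U$; $\Lambda=\{(0,0),(0,2),(2,0)\}$. Define $F_\sigma=1\!\!1_{J_\sigma}$ for $\sigma\in\{0,1,\infty\}$, and recursively $F_\sigma=F_{\sigma_0}*F_{\sigma_1}*1\!\!1_\Lambda-F_{\sigma'}$ for $\sigma\in\mathcal{Q}\smallsetminus\{0,1,\infty\}$. The supremum and inequality are pointwise. *)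

theory Defs
  imports Complex_Main
begin

(* Points of the extended set Q = Q^{>=0} \<union> {\<infinity>} are represented by their unique
   reduced representation (q,p) of sigma = q/p, q,p >= 0 coprime; \<infinity> = (1,0), 0 = (0,1). *)
definition Qset :: "(int \<times> int) set" where
  "Qset = {(q,p). 0 \<le> q \<and> 0 \<le> p \<and> coprime q p}"

definition Qzero :: "int \<times> int" where "Qzero = (0,1)"
definition Qone :: "int \<times> int" where "Qone = (1,1)"
definition Qinf :: "int \<times> int" where "Qinf = (1,0)"

definition J :: "int \<times> int \<Rightarrow> (int \<times> int) set" where
  "J \<sigma> = (case \<sigma> of (q,p) \<Rightarrow>
     {(\<alpha>,\<beta>). \<alpha> mod 2 = q mod 2 \<and> \<beta> mod 2 = p mod 2 \<and> \<alpha> \<ge> -q \<and> \<beta> \<ge> -p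
        \<and> \<alpha> + \<beta> \<le> p + q - 2 \<and> p * \<alpha> + q * \<beta> \<ge> 0})"

definition Ppt :: "int \<times> int \<Rightarrow> int \<Rightarrow> int \<times> int" where
  "Ppt \<sigma> i = (case \<sigma> of (q,p) \<Rightarrow> (q + 2*i, -p))"

definition Qpt :: "int \<times> int \<Rightarrow> int \<Rightarrow> int \<times> int" where
  "Qpt \<sigma> j = (case \<sigma> of (q,p) \<Rightarrow> (-q, p + 2*j))"

definition ind :: "(int \<times> int) set \<Rightarrow> int \<times> int \<Rightarrow> int" where
  "ind U x = (if x \<in> U then 1 else 0)"

definition conv :: "(int \<times> int \<Rightarrow> int) \<Rightarrow> (int \<times> int \<Rightarrow> int) \<Rightarrow> int \<times> int \<Rightarrow> int" where
  "conv F G u = (\<Sum>x\<in>{x. F x \<noteq> 0}. F x * G (fst u - fst x, snd u - snd x))"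

definition Lambda :: "(int \<times> int) set" where
  "Lambda = {(0,0), (0,2), (2,0)}"

definition farey_nbr :: "int \<times> int \<Rightarrow> int \<times> int \<Rightarrow> bool" where
  "farey_nbr a b = (case a of (q0,p0) \<Rightarrow> case b of (q1,p1) \<Rightarrow> \<bar>q0 * p1 - q1 * p0\<bar> = 1)"

(* the hyperbolic geodesic (in the open upper half plane) joining the cusps a and b
   (for a Farey pair at most one of them is \<infinity>, i.e. has p = 0) *)
definition geod :: "int \<times> int \<Rightarrow> int \<times> int \<Rightarrow> complex set" where
  "geod a b = (case a of (q0,p0) \<Rightarrow> case b of (q1,p1) \<Rightarrow>
     {z. 0 < Im z \<and>
        (if p0 = 0 then Re z = real_of_int q1 / real_of_int p1
         else if p1 = 0 then Re z = real_of_int q0 / real_of_int p0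
         else cmod (z - complex_of_real ((real_of_int q0 / real_of_int p0 + real_of_int q1 / real_of_int p1) / 2))
              = \<bar>real_of_int q0 / real_of_int p0 - real_of_int q1 / real_of_int p1\<bar> / 2)})"

(* L_sigma for sigma = q/p in Q^{>0} \<setminus> {1}: the geodesic arc from x = q/p to i.
   It lies on the semicircle centred at the real point c = (x^2-1)/(2x) (the unique real
   point equidistant from x and i), and the arc from x to i is the part with Re z \<ge> 0. *)
definition Lgeo :: "int \<times> int \<Rightarrow> complex set" where
  "Lgeo \<sigma> = (case \<sigma> of (q,p) \<Rightarrow>
     let x = real_of_int q / real_of_int p; c = (x^2 - 1) / (2*x) in
     {z. 0 < Im z \<and> cmod (z - complex_of_real c) = cmod (\<i> - complex_of_real c) \<and> 0 \<le> Re z})"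

(* {a,b} is the first Farey edge crossed by L_sigma, i.e. the one whose crossing point is
   closest to sigma along L_sigma (along the arc, closeness to sigma = larger real part). *)
definition first_edge :: "int \<times> int \<Rightarrow> int \<times> int \<Rightarrow> int \<times> int \<Rightarrow> bool" where
  "first_edge \<sigma> a b \<longleftrightarrow> a \<in> Qset \<and> b \<in> Qset \<and> farey_nbr a b \<and>
     (\<exists>z. z \<in> Lgeo \<sigma> \<inter> geod a b \<and>
        (\<forall>a' b' z'. farey_nbr a' b' \<and> geod a' b' \<noteq> geod a b \<and> z' \<in> Lgeo \<sigma> \<inter> geod a' b'
             \<longrightarrow> Re z' < Re z))"

definition is_parents :: "int \<times> int \<Rightarrow> int \<times> int \<Rightarrow> int \<times> int \<Rightarrow> bool" where
  "is_parents \<sigma> a b \<longleftrightarrow>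
     (\<sigma> = Qone \<and> {a,b} = {Qzero, Qinf}) \<or>
     (\<sigma> \<in> Qset \<and> \<sigma> \<notin> {Qzero, Qone, Qinf} \<and> first_edge \<sigma> a b)"

(* the system (F_sigma) as an inductively generated graph; F_sigma is its unique value *)
inductive isF :: "int \<times> int \<Rightarrow> (int \<times> int \<Rightarrow> int) \<Rightarrow> bool" where
  base: "\<sigma> \<in> {Qzero, Qone, Qinf} \<Longrightarrow> isF \<sigma> (ind (J \<sigma>))"
| step: "\<sigma> \<in> Qset \<Longrightarrow> \<sigma> \<notin> {Qzero, Qone, Qinf} \<Longrightarrow>
         is_parents \<sigma> \<sigma>0 \<sigma>1 \<Longrightarrow> is_parents \<sigma>1 \<sigma>0 \<sigma>' \<Longrightarrow>
         isF \<sigma>0 f0 \<Longrightarrow> isF \<sigma>1 f1 \<Longrightarrow> isF \<sigma>' f' \<Longrightarrow>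
         isF \<sigma> (\<lambda>u. conv (conv f0 f1) (ind Lambda) u - f' u)"

definition F :: "int \<times> int \<Rightarrow> int \<times> int \<Rightarrow> int" where
  "F \<sigma> = (THE f. isF \<sigma> f)"

end

theory Submission
  imports Defs "HOL-Library.Product_Plus"
begin


lemma J_mem: "((a, b) \<in> J (q, p)) = (a mod 2 = q mod 2 \<and> b mod 2 = p mod 2 \<and> -q \<le> a \<and> -p \<le> b
        \<and> a + b \<le> p + q - 2 \<and> 0 \<le> p * a + q * b)"
  by (simp add: J_def)

lemma J_swap: "((a, b) \<in> J (q, p)) = ((b, a) \<in> J (p, q))"
  by (auto simp: J_mem algebra_simps)

lemma uniqmin:
  fixes a b q0 p0 p q :: int
  assumes "-q0 \<le> a" "-p0 \<le> b" "0 \<le> p0*a + q0*b" "q*p0 - p*q0 = 1" "0 < p" "0 < q"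
  shows "0 \<le> p*(a - q0) + q*(b + p0) \<and> (p*(a - q0) + q*(b + p0) = 0 \<longrightarrow> a = q0 \<and> b = -p0)"
proof (cases "q0 \<le> a")
  case True
  then have h1: "0 \<le> p*(a - q0)" using assms by simp
  have h2: "0 \<le> q*(b + p0)" using assms by simp
  have "p*(a - q0) + q*(b + p0) = 0 \<longrightarrow> a = q0 \<and> b = -p0"
  proof
    assume "p*(a - q0) + q*(b + p0) = 0"
    then have "p*(a - q0) = 0" "q*(b+p0) = 0" using h1 h2 by linarith+
    then show "a = q0 \<and> b = - p0" using assms by auto
  qed
  then show ?thesis using h1 h2 by simp
next
  case False
  then have q0p: "0 < q0" using assms by linarith
  have "q * (q0*b) \<ge> q * (- p0 * a)" using assms by (intro mult_left_mono) auto
  then have "q0 * (p*(a - q0) + q*(b + p0)) \<ge> q0 - a"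
    using assms(4) by (simp add: algebra_simps)
  then have "q0 * (p*(a - q0) + q*(b + p0)) > 0" using False by linarith
  then have "p*(a - q0) + q*(b + p0) > 0" using q0p by (simp add: zero_less_mult_iff)
  then show ?thesis by simp
qed

lemma Lambda_cases: "(l1, l2) \<in> Lambda \<longleftrightarrow> (l1 = 0 \<and> l2 = 0) \<or> (l1 = 0 \<and> l2 = 2) \<or> (l1 = 2 \<and> l2 = 0)"
  by (auto simp: Lambda_def)

lemma even_diff_mod: "(a::int) mod 2 = b mod 2 \<Longrightarrow> \<exists>k. a = b + 2*k"
  by presburger

lemma G1:
  fixes q0 p0 q1 p1 a0 b0 a1 b1 l1 l2 :: int
  assumes ori: "q1*p0 - q0*p1 = 1" and nn: "0 \<le> q0" "0 \<le> p0" "0 \<le> q1" "0 \<le> p1"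
    and x: "(a0,b0) \<in> J (q0,p0)" and y: "(a1,b1) \<in> J (q1,p1)" and l: "(l1,l2) \<in> Lambda"
    and nj: "(a0+a1+l1, b0+b1+l2) \<notin> J (q0+q1, p0+p1)"
  shows "a0 = q0 \<and> b0 = -p0 \<and> a1 = -q1 \<and> b1 = p1 \<and> l1 = 0 \<and> l2 = 0"
proof -
  have p0: "1 \<le> p0" using ori nn by (smt (verit) mult_nonneg_nonneg mult_eq_0_iff)
  have q1: "1 \<le> q1" using ori nn by (smt (verit) mult_nonneg_nonneg mult_eq_0_iff)
  define p where "p = p0 + p1"
  define q where "q = q0 + q1"
  have pp: "0 < p" "0 < q" using p0 q1 nn by (auto simp: p_def q_def)
  have c1: "q*p0 - p*q0 = 1" using ori by (simp add: p_def q_def algebra_simps)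
  have c2: "p*q1 - q*p1 = 1" using ori by (simp add: p_def q_def algebra_simps)
  have xm: "a0 mod 2 = q0 mod 2" "b0 mod 2 = p0 mod 2" "-q0 \<le> a0" "-p0 \<le> b0" "a0 + b0 \<le> p0 + q0 - 2" "0 \<le> p0*a0 + q0*b0"
    using x by (auto simp: J_mem)
  have ym: "a1 mod 2 = q1 mod 2" "b1 mod 2 = p1 mod 2" "-q1 \<le> a1" "-p1 \<le> b1" "a1 + b1 \<le> p1 + q1 - 2" "0 \<le> p1*a1 + q1*b1"
    using y by (auto simp: J_mem)
  have U0: "0 \<le> p*(a0 - q0) + q*(b0 + p0) \<and> (p*(a0 - q0) + q*(b0 + p0) = 0 \<longrightarrow> a0 = q0 \<and> b0 = -p0)"
    by (rule uniqmin) (use xm c1 pp in auto)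
  have U1: "0 \<le> q*(b1 - p1) + p*(a1 + q1) \<and> (q*(b1 - p1) + p*(a1 + q1) = 0 \<longrightarrow> b1 = p1 \<and> a1 = -q1)"
    by (rule uniqmin) (use ym c2 pp in \<open>auto simp: algebra_simps\<close>)
  have "\<exists>k0. a0 - q0 = 2*k0" using xm(1) by presburger
  then obtain k0 where k0: "a0 - q0 = 2*k0" by blast
  have "\<exists>m0. b0 + p0 = 2*m0" using xm(2) by presburger
  then obtain m0 where m0: "b0 + p0 = 2*m0" by blast
  have "\<exists>k1. a1 + q1 = 2*k1" using ym(1) by presburger
  then obtain k1 where k1: "a1 + q1 = 2*k1" by blast
  have "\<exists>m1. b1 - p1 = 2*m1" using ym(2) by presburger
  then obtain m1 where m1: "b1 - p1 = 2*m1" by blast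
  define D0 where "D0 = p*(a0 - q0) + q*(b0 + p0)"
  define D1 where "D1 = q*(b1 - p1) + p*(a1 + q1)"
  have D0e: "D0 = 2*(p*k0 + q*m0)" unfolding D0_def k0 m0 by simp
  have D1e: "D1 = 2*(q*m1 + p*k1)" unfolding D1_def k1 m1 by simp
  have w: "p*(a0+a1+l1) + q*(b0+b1+l2) = D0 + D1 + p*l1 + q*l2 - 2"
    using c1 c2 unfolding D0_def D1_def by (simp add: algebra_simps)
  have lo: "l1 = 0 \<and> l2 = 0 \<or> l1 = 0 \<and> l2 = 2 \<or> l1 = 2 \<and> l2 = 0" using l by (simp add: Lambda_cases)
  have par: "(a0+a1+l1) mod 2 = (q0+q1) mod 2" "(b0+b1+l2) mod 2 = (p0+p1) mod 2"
  proof -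
    have e1: "(a0+a1+l1) = (q0+q1) + 2*(k0+k1-q1+ l1 div 2)" using k0 k1 lo by auto
    have e2: "(b0+b1+l2) = (p0+p1) + 2*(m0+m1-p0+ l2 div 2)" using m0 m1 lo by auto
    show "(a0+a1+l1) mod 2 = (q0+q1) mod 2" unfolding e1 by (simp only: mod_mult_self2)
    show "(b0+b1+l2) mod 2 = (p0+p1) mod 2" unfolding e2 by (simp only: mod_mult_self2)
  qed
  have other: "-(q0+q1) \<le> a0+a1+l1" "-(p0+p1) \<le> b0+b1+l2" "(a0+a1+l1) + (b0+b1+l2) \<le> (p0+p1) + (q0+q1) - 2"
    using lo xm(3,4,5) ym(3,4,5) by auto
  have neg: "p*(a0+a1+l1) + q*(b0+b1+l2) < 0"
  proof (rule ccontr)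
    assume "\<not> ?thesis"
    then have "(a0+a1+l1, b0+b1+l2) \<in> J (q0+q1, p0+p1)"
      using par other by (simp add: J_mem p_def q_def)
    then show False using nj by simp
  qed
  have "D0 + D1 + p*l1 + q*l2 < 2" using neg w by linarith
  moreover have "0 \<le> D0" "0 \<le> D1" using U0 U1 by (auto simp: D0_def D1_def)
  moreover have "0 \<le> p*l1" "0 \<le> q*l2" using lo pp by auto
  ultimately have "D0 = 0" "D1 = 0" "p*l1 + q*l2 < 2" using D0e D1e by arith+
  then have "l1 = 0 \<and> l2 = 0" using lo pp by auto
  then show ?thesis using U0 U1 \<open>D0 = 0\<close> \<open>D1 = 0\<close> by (auto simp: D0_def D1_def)
qed

definition Rr :: "int \<Rightarrow> int \<Rightarrow> int \<Rightarrow> int \<Rightarrow> bool" where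
  "Rr q p i j \<longleftrightarrow> 0 \<le> i \<and> 0 \<le> j \<and> i + j \<le> p + q - 1 \<and> p * q \<le> p * i + q * j"

lemma Rr_J: "Rr q p i j \<Longrightarrow> (2*i - q, 2*j - p) \<in> J (q, p)"
proof -
  assume h: "Rr q p i j"
  have "(2*i - q) mod 2 = q mod 2" "(2*j - p) mod 2 = p mod 2" by presburger+
  then show ?thesis using h unfolding Rr_def J_mem by (simp add: algebra_simps)
qed

lemma J_Rr: assumes "(a, b) \<in> J (q, p)" shows "\<exists>i j. a = 2*i - q \<and> b = 2*j - p \<and> Rr q p i j"
proof -
  have m: "a mod 2 = q mod 2" "b mod 2 = p mod 2" using assms by (auto simp: J_mem)
  have "\<exists>i. a = 2*i - q" using m(1) by presburger
  then obtain i where i: "a = 2*i - q" by blast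
  have "\<exists>j. b = 2*j - p" using m(2) by presburger
  then obtain j where j: "b = 2*j - p" by blast
  have "Rr q p i j" using assms unfolding J_mem Rr_def i j by (auto simp: algebra_simps)
  then show ?thesis using i j by blast
qed

lemma DIST:
  fixes r1 r2 c0 c1 :: int
  assumes "0 \<le> r1" "0 \<le> r2" "0 \<le> c0" "0 \<le> c1" "r1 + r2 \<le> c0 + c1 + 1"
  shows "\<exists>s1 s2 t1 t2 e1 e2. 0 \<le> s1 \<and> 0 \<le> s2 \<and> 0 \<le> t1 \<and> 0 \<le> t2 \<and> 0 \<le> e1 \<and> 0 \<le> e2
     \<and> s1 + t1 + e1 = r1 \<and> s2 + t2 + e2 = r2 \<and> s1 + s2 \<le> c0 \<and> t1 + t2 \<le> c1 \<and> e1 + e2 \<le> 1"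
proof -
  obtain e1 e2 :: int where e: "0 \<le> e1" "0 \<le> e2" "e1 \<le> r1" "e2 \<le> r2" "e1 + e2 \<le> 1" "r1 + r2 - e1 - e2 \<le> c0 + c1"
  proof (cases "r1 + r2 \<le> c0 + c1")
    case True then show ?thesis using that[of 0 0] assms by auto
  next
    case False
    show ?thesis
    proof (cases "0 < r1")
      case True then show ?thesis using that[of 1 0] assms False by auto
    next
      case f2: False then show ?thesis using that[of 0 1] assms False by auto
    qed
  qed
  define s1 where "s1 = min (r1 - e1) c0"
  define s2 where "s2 = min (r2 - e2) (c0 - s1)"
  show ?thesis
    apply (rule exI[of _ s1], rule exI[of _ s2], rule exI[of _ "r1 - e1 - s1"], rule exI[of _ "r2 - e2 - s2"],
           rule exI[of _ e1], rule exI[of _ e2])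
    using e assms unfolding s1_def s2_def by auto
qed

lemma combine:
  fixes q0 p0 q1 p1 i j x1 x2 y1 y2 :: int
  assumes nn: "0 \<le> q0" "0 \<le> p0" "0 \<le> q1" "0 \<le> p1"
    and m0: "Rr q0 p0 x1 x2" and m1: "Rr q1 p1 y1 y2"
    and le: "x1 + y1 \<le> i" "x2 + y2 \<le> j" "i + j \<le> (p0+p1) + (q0+q1) - 1"
  shows "\<exists>i0 j0 i1 j1 e1 e2. Rr q0 p0 i0 j0 \<and> Rr q1 p1 i1 j1 \<and> 0 \<le> e1 \<and> 0 \<le> e2 \<and> e1 + e2 \<le> 1
          \<and> i = i0 + i1 + e1 \<and> j = j0 + j1 + e2"
proof -
  have a: "0 \<le> x1" "0 \<le> x2" "x1 + x2 \<le> p0 + q0 - 1" "p0*q0 \<le> p0*x1 + q0*x2" using m0 unfolding Rr_def by auto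
  have b: "0 \<le> y1" "0 \<le> y2" "y1 + y2 \<le> p1 + q1 - 1" "p1*q1 \<le> p1*y1 + q1*y2" using m1 unfolding Rr_def by auto
  have pre: "0 \<le> i - x1 - y1" "0 \<le> j - x2 - y2" "0 \<le> p0 + q0 - 1 - x1 - x2" "0 \<le> p1 + q1 - 1 - y1 - y2"
     "(i - x1 - y1) + (j - x2 - y2) \<le> (p0 + q0 - 1 - x1 - x2) + (p1 + q1 - 1 - y1 - y2) + 1"
    using a b le by linarith+
  from DIST[OF pre] obtain s1 s2 t1 t2 e1 e2 where d: "0 \<le> s1" "0 \<le> s2" "0 \<le> t1" "0 \<le> t2" "0 \<le> e1" "0 \<le> e2"
     "s1 + t1 + e1 = i - x1 - y1" "s2 + t2 + e2 = j - x2 - y2" "s1 + s2 \<le> p0 + q0 - 1 - x1 - x2"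
     "t1 + t2 \<le> p1 + q1 - 1 - y1 - y2" "e1 + e2 \<le> 1"
    by blast
  have w0: "p0*x1 + q0*x2 \<le> p0*(x1+s1) + q0*(x2+s2)" using d nn by (simp add: algebra_simps)
  have w1: "p1*y1 + q1*y2 \<le> p1*(y1+t1) + q1*(y2+t2)" using d nn by (simp add: algebra_simps)
  have r0: "Rr q0 p0 (x1 + s1) (x2 + s2)" unfolding Rr_def using a d w0 by linarith
  have r1: "Rr q1 p1 (y1 + t1) (y2 + t2)" unfolding Rr_def using b d w1 by linarith
  have "i = (x1+s1) + (y1+t1) + e1" "j = (x2+s2) + (y2+t2) + e2" using d by linarith+
  then show ?thesis using r0 r1 d(5,6,11) by blast
qed

lemma sumset_ij:
  fixes q0 p0 q1 p1 i j :: int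
  assumes ori: "q1*p0 - q0*p1 = 1" and nn: "0 \<le> q0" "0 \<le> p0" "0 \<le> q1" "0 \<le> p1"
    and u: "Rr (q0+q1) (p0+p1) i j"
  shows "\<exists>i0 j0 i1 j1 e1 e2. Rr q0 p0 i0 j0 \<and> Rr q1 p1 i1 j1 \<and> 0 \<le> e1 \<and> 0 \<le> e2 \<and> e1 + e2 \<le> 1
          \<and> i = i0 + i1 + e1 \<and> j = j0 + j1 + e2"
proof -
  have p0: "1 \<le> p0" using ori nn by (smt (verit) mult_nonneg_nonneg mult_eq_0_iff)
  have q1: "1 \<le> q1" using ori nn by (smt (verit) mult_nonneg_nonneg mult_eq_0_iff)
  define p where "p = p0 + p1"
  define q where "q = q0 + q1"
  have uu: "0 \<le> i" "0 \<le> j" "i + j \<le> p + q - 1" "p*q \<le> p*i + q*j" using u unfolding Rr_def p_def q_def by auto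
  have deg: "i + j \<le> (p0+p1) + (q0+q1) - 1" using uu by (simp add: p_def q_def)
  have c1: "q*p0 - p*q0 = 1" using ori by (simp add: p_def q_def algebra_simps)
  have c2: "p*q1 - q*p1 = 1" using ori by (simp add: p_def q_def algebra_simps)
  have c3: "p*q0 + q*p1 = p*q - 1" using ori by (simp add: p_def q_def algebra_simps)
  have P0: "Rr q0 p0 q0 0" using p0 nn unfolding Rr_def by auto
  have Q1: "Rr q1 p1 0 p1" using q1 nn unfolding Rr_def by auto
  show ?thesis
  proof (cases "q0 \<le> i")
    case True
    show ?thesis
    proof (cases "p1 \<le> j")
      case True
      show ?thesis by (rule combine[OF nn P0 Q1]) (use \<open>q0 \<le> i\<close> True deg in auto)
    next
      case jlt: False
      show ?thesis
      proof (cases "q \<le> i")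
        case True
        have p1: "1 \<le> p1" using jlt uu by linarith
        have P1: "Rr q1 p1 q1 0" using p1 nn unfolding Rr_def by auto
        show ?thesis by (rule combine[OF nn P0 P1]) (use True deg uu in \<open>auto simp: q_def\<close>)
      next
        case ilt: False
        define a where "a = i - q0"
        have a0: "0 \<le> a" "a < q1" using \<open>q0 \<le> i\<close> ilt by (auto simp: a_def q_def)
        have H: "p*q1 \<le> p*a + q*j" using uu by (simp add: a_def q_def algebra_simps)
        have W: "p1*q1 \<le> p1*a + q1*j"
        proof (rule ccontr)
          assume "\<not> ?thesis"
          then have n: "p1*a + q1*j \<le> p1*q1 - 1" by simp
          have "q1*(p*q1) \<le> q1*(p*a + q*j)" using H nn by (simp add: mult_left_mono)
          also have "q1*(p*a + q*j) = q*(p1*a + q1*j) + a" using c2 by (simp add: algebra_simps)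
          also have "\<dots> \<le> q*(p1*q1 - 1) + a" using n nn q1 by (simp add: mult_left_mono q_def)
          finally have "q1*(p*q1) \<le> q*(p1*q1 - 1) + a" .
          moreover have "q1*(p*q1) = q*p1*q1 + q1" using c2 by (simp add: algebra_simps)
          ultimately have "q + q1 \<le> a" by (simp add: algebra_simps)
          then show False using a0 nn by (simp add: q_def)
        qed
        have M1: "Rr q1 p1 a j" unfolding Rr_def using a0 uu jlt W by auto
        show ?thesis by (rule combine[OF nn P0 M1]) (use deg in \<open>auto simp: a_def\<close>)
      qed
    qed
  next
    case False
    have q0: "1 \<le> q0" using False uu by linarith
    have jge: "p1 \<le> j"
    proof (rule ccontr)
      assume "\<not> ?thesis"
      then have "j \<le> p1 - 1" by simp
      then have "p*i + q*j \<le> p*(q0 - 1) + q*(p1 - 1)" using False uu p0 q1 nn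
        by (intro add_mono mult_left_mono) (auto simp: p_def q_def)
      then show False using uu c3 p0 q1 nn by (simp add: algebra_simps p_def q_def)
    qed
    show ?thesis
    proof (cases "p0 \<le> j - p1")
      case True
      have Q0: "Rr q0 p0 0 p0" using q0 nn unfolding Rr_def by auto
      show ?thesis by (rule combine[OF nn Q0 Q1]) (use True deg uu in auto)
    next
      case jlt: False
      define b where "b = j - p1"
      have b0: "0 \<le> b" "b < p0" using jge jlt by (auto simp: b_def)
      have H: "q*p0 \<le> p*i + q*b" using uu by (simp add: b_def p_def algebra_simps)
      have W: "p0*q0 \<le> p0*i + q0*b"
      proof (rule ccontr)
        assume "\<not> ?thesis"
        then have n: "p0*i + q0*b \<le> p0*q0 - 1" by simp
        have "p0*(q*p0) \<le> p0*(p*i + q*b)" using H nn by (simp add: mult_left_mono)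
        also have "p0*(p*i + q*b) = p*(p0*i + q0*b) + b" using c1 by (simp add: algebra_simps)
        also have "\<dots> \<le> p*(p0*q0 - 1) + b" using n nn p0 by (simp add: mult_left_mono p_def)
        finally have "p0*(q*p0) \<le> p*(p0*q0 - 1) + b" .
        moreover have "p0*(q*p0) = p*q0*p0 + p0" using c1 by (simp add: algebra_simps)
        ultimately have "p + p0 \<le> b" by (simp add: algebra_simps)
        then show False using b0 nn by (simp add: p_def)
      qed
      have M0: "Rr q0 p0 i b" unfolding Rr_def using b0 uu False W by auto
      show ?thesis by (rule combine[OF nn M0 Q1]) (use deg in \<open>auto simp: b_def\<close>)
    qed
  qed
qed

lemma sumset:
  fixes q0 p0 q1 p1 :: int and u :: "int \<times> int"
  assumes ori: "q1*p0 - q0*p1 = 1" and nn: "0 \<le> q0" "0 \<le> p0" "0 \<le> q1" "0 \<le> p1"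
    and u: "u \<in> J (q0+q1, p0+p1)"
  shows "\<exists>x\<in>J (q0,p0). \<exists>l\<in>Lambda. u - l - x \<in> J (q1,p1)"
proof -
  obtain a b where ab: "u = (a,b)" by (cases u)
  obtain i j where ij: "a = 2*i - (q0+q1)" "b = 2*j - (p0+p1)" "Rr (q0+q1) (p0+p1) i j"
    using J_Rr[of a b "q0+q1" "p0+p1"] u ab by auto
  obtain i0 j0 i1 j1 e1 e2 where d: "Rr q0 p0 i0 j0" "Rr q1 p1 i1 j1" "0 \<le> e1" "0 \<le> e2" "e1 + e2 \<le> 1"
     "i = i0 + i1 + e1" "j = j0 + j1 + e2"
    using sumset_ij[OF ori nn ij(3)] by blast
  have x: "(2*i0 - q0, 2*j0 - p0) \<in> J (q0,p0)" using Rr_J[OF d(1)] .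
  have y: "(2*i1 - q1, 2*j1 - p1) \<in> J (q1,p1)" using Rr_J[OF d(2)] .
  have l: "(2*e1, 2*e2) \<in> Lambda"
  proof -
    have "(e1 = 0 \<and> e2 = 0) \<or> (e1 = 0 \<and> e2 = 1) \<or> (e1 = 1 \<and> e2 = 0)" using d(3,4,5) by auto
    then show ?thesis by (auto simp: Lambda_def)
  qed
  have "u - (2*e1, 2*e2) - (2*i0 - q0, 2*j0 - p0) = (2*i1 - q1, 2*j1 - p1)"
    using ab ij d by simp
  then show ?thesis using x y l by metis
qed

lemma cornerP:
  fixes q0 p0 q1 p1 a0 b0 a1 b1 l1 l2 :: int
  assumes det: "\<bar>q0*p1 - q1*p0\<bar> = 1" and nn: "0 \<le> q0" "0 \<le> p0" "0 \<le> q1" "0 \<le> p1"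
    and x: "(a0,b0) \<in> J (q0,p0)" and y: "(a1,b1) \<in> J (q1,p1)" and l: "(l1,l2) \<in> Lambda"
    and s: "a0 + a1 + l1 = q0 + q1" "b0 + b1 + l2 = -(p0 + p1)"
  shows "(a0, b0) = (if p0 = 0 then (-q0, p0) else (q0, -p0)) \<and> (l1, l2) = (if p0 = 0 \<or> p1 = 0 then (2,0) else (0,0))"
proof -
  have xm: "-q0 \<le> a0" "-p0 \<le> b0" "a0 + b0 \<le> p0 + q0 - 2" "0 \<le> p0*a0 + q0*b0"
    using x by (auto simp: J_mem)
  have ym: "-q1 \<le> a1" "-p1 \<le> b1" "a1 + b1 \<le> p1 + q1 - 2" "0 \<le> p1*a1 + q1*b1"
    using y by (auto simp: J_mem)
  have lo: "l1 = 0 \<and> l2 = 0 \<or> l1 = 0 \<and> l2 = 2 \<or> l1 = 2 \<and> l2 = 0" using l by (simp add: Lambda_cases)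
  have b: "b0 = -p0" "b1 = -p1" "l2 = 0" using xm(2) ym(2) s(2) lo by auto
  have w0: "p0*q0 \<le> p0*a0" using xm(4) b by (simp add: algebra_simps)
  have w1: "p1*q1 \<le> p1*a1" using ym(4) b by (simp add: algebra_simps)
  consider "p0 = 0" | "p1 = 0" | "0 < p0" "0 < p1" using nn by linarith
  then show ?thesis
  proof cases
    case 1
    then have "q0*p1 = 1" using det nn by auto
    then have "q0 = 1" "p1 = 1" using nn by (auto simp: pos_zmult_eq_1_iff zmult_eq_1_iff)
    then have "a0 = -1" "a1 = q1" using xm ym b 1 w1 by auto
    then show ?thesis using 1 b s \<open>q0 = 1\<close> by auto
  next
    case 2
    then have "q1*p0 = 1" using det nn by auto
    then have "q1 = 1" "p0 = 1" using nn by (auto simp: zmult_eq_1_iff)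
    then have "a1 = -1" "a0 = q0" using xm ym b 2 w0 by auto
    then show ?thesis using 2 b s \<open>q1 = 1\<close> \<open>p0 = 1\<close> by auto
  next
    case 3
    then have "q0 \<le> a0" "q1 \<le> a1" using w0 w1 by auto
    then show ?thesis using 3 b s lo by auto
  qed
qed



lemma conv_eq:
  assumes "finite A" "{x. Fa x \<noteq> 0} \<subseteq> A"
  shows "conv Fa Ga u = (\<Sum>x\<in>A. Fa x * Ga (u - x))"
proof -
  have "conv Fa Ga u = (\<Sum>x\<in>{x. Fa x \<noteq> 0}. Fa x * Ga (u - x))"
    unfolding conv_def by (simp add: minus_prod_def)
  also have "\<dots> = (\<Sum>x\<in>A. Fa x * Ga (u - x))"
    by (rule sum.mono_neutral_left) (use assms in auto)
  finally show ?thesis .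
qed

lemma conv_single: "conv (ind {P}) Ga u = Ga (u - P)"
proof -
  have "conv (ind {P}) Ga u = (\<Sum>x\<in>{P}. ind {P} x * Ga (u - x))"
    by (rule conv_eq) (auto simp: ind_def)
  then show ?thesis by (simp add: ind_def)
qed

lemma finite_J: "finite (J \<sigma>)"
proof -
  obtain q p where s: "\<sigma> = (q,p)" by (cases \<sigma>)
  have "J (q,p) \<subseteq> {-q..2*p+q} \<times> {-p..2*q+p}"
    by (auto simp: J_def)
  then show ?thesis using s by (auto intro: finite_subset)
qed

lemma finite_conv_supp:
  assumes "finite {x. Fa x \<noteq> 0}" "finite {x. Ga x \<noteq> 0}"
  shows "finite {u. conv Fa Ga u \<noteq> 0}"
proof -
  have "{u. conv Fa Ga u \<noteq> 0} \<subseteq> (\<lambda>(x,y). x + y) ` ({x. Fa x \<noteq> 0} \<times> {x. Ga x \<noteq> 0})"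
  proof
    fix u assume "u \<in> {u. conv Fa Ga u \<noteq> 0}"
    then have "(\<Sum>x\<in>{x. Fa x \<noteq> 0}. Fa x * Ga (u - x)) \<noteq> 0"
      using conv_eq[OF assms(1), of Fa Ga u] by auto
    then obtain x where "x \<in> {x. Fa x \<noteq> 0}" "Fa x * Ga (u - x) \<noteq> 0"
      by (meson sum.not_neutral_contains_not_neutral)
    then have "Fa x \<noteq> 0" "Ga (u - x) \<noteq> 0" by auto
    then show "u \<in> (\<lambda>(x,y). x + y) ` ({x. Fa x \<noteq> 0} \<times> {x. Ga x \<noteq> 0})"
      by (intro image_eqI[of _ _ "(x, u - x)"]) auto
  qed
  then show ?thesis using assms by (auto intro: finite_subset)
qed

lemma Lambda_eq: "Lambda = {(0,0), (0,2), (2,0)}" by (simp add: Lambda_def)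

lemma Sig_eq:
  assumes fA: "finite A" and sA: "{x. f0 x \<noteq> 0} \<subseteq> A" and f1: "finite {x. f1 x \<noteq> 0}"
  shows "conv (conv f0 f1) (ind Lambda) u = (\<Sum>(l,x)\<in>Lambda \<times> A. f0 x * f1 (u - l - x))"
proof -
  have fin0: "finite {x. f0 x \<noteq> 0}" using fA sA by (rule finite_subset[rotated])
  have fc: "finite {x. conv f0 f1 x \<noteq> 0}" by (rule finite_conv_supp[OF fin0 f1])
  define B where "B = {x. conv f0 f1 x \<noteq> 0} \<union> (\<lambda>l. u - l) ` Lambda"
  have fB: "finite B" using fc by (simp add: B_def Lambda_def)
  have "conv (conv f0 f1) (ind Lambda) u = (\<Sum>y\<in>B. conv f0 f1 y * ind Lambda (u - y))"
    by (rule conv_eq[OF fB]) (auto simp: B_def)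
  also have "\<dots> = (\<Sum>y\<in>(\<lambda>l. u - l) ` Lambda. conv f0 f1 y * ind Lambda (u - y))"
  proof (rule sum.mono_neutral_right[OF fB])
    show "(\<lambda>l. u - l) ` Lambda \<subseteq> B" by (auto simp: B_def)
    have h: "\<And>y. u - y \<in> Lambda \<Longrightarrow> y \<in> (\<lambda>l. u - l) ` Lambda"
      by (rule image_eqI[of _ _ "u - y" for y]) auto
    show "\<forall>i\<in>B - (\<lambda>l. u - l) ` Lambda. conv f0 f1 i * ind Lambda (u - i) = 0"
      using h by (auto simp: ind_def)
  qed
  also have "\<dots> = (\<Sum>l\<in>Lambda. conv f0 f1 (u - l) * ind Lambda (u - (u - l)))"
    by (subst sum.reindex) (auto simp: inj_on_def)
  also have "\<dots> = (\<Sum>l\<in>Lambda. conv f0 f1 (u - l))"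
    by (simp add: ind_def)
  also have "\<dots> = (\<Sum>l\<in>Lambda. \<Sum>x\<in>A. f0 x * f1 (u - l - x))"
    by (rule sum.cong[OF refl]) (rule conv_eq[OF fA sA])
  also have "\<dots> = (\<Sum>(l,x)\<in>Lambda \<times> A. f0 x * f1 (u - l - x))"
    by (rule sum.cartesian_product)
  finally show ?thesis .
qed

lemma sum_two_le:
  fixes g :: "'a \<Rightarrow> int"
  assumes "finite S" "a \<in> S" "b \<in> S" "a \<noteq> b" "\<And>x. x \<in> S \<Longrightarrow> 0 \<le> g x"
  shows "g a + g b \<le> sum g S"
proof -
  have "sum g {a,b} \<le> sum g S" by (rule sum_mono2) (use assms in auto)
  then show ?thesis using assms(4) by simp
qed

lemma sum_single_eq:
  fixes g :: "'a \<Rightarrow> int"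
  assumes "finite S" "a \<in> S" "\<And>x. x \<in> S \<Longrightarrow> x \<noteq> a \<Longrightarrow> g x = 0"
  shows "sum g S = g a"
proof -
  have "sum g S = g a + sum g (S - {a})" using assms by (simp add: sum.remove)
  also have "sum g (S - {a}) = 0" by (rule sum.neutral) (use assms in auto)
  finally show ?thesis by simp
qed



definition dec :: "int \<times> int \<Rightarrow> int \<times> int \<Rightarrow> int \<times> int \<Rightarrow> bool" where
  "dec \<sigma> a b \<longleftrightarrow> a \<in> Qset \<and> b \<in> Qset \<and> a + b = \<sigma> \<and> \<bar>fst a * snd b - fst b * snd a\<bar> = 1"

lemma cmod_eq_iff: "r \<ge> 0 \<Longrightarrow> (cmod w = r) \<longleftrightarrow> (Re w)^2 + (Im w)^2 = r^2"
proof -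
  assume r: "r \<ge> 0"
  have "(cmod w)^2 = (Re w)^2 + (Im w)^2" by (rule cmod_power2)
  moreover have "(cmod w = r) \<longleftrightarrow> (cmod w)^2 = r^2" using r by (simp add: power2_eq_iff_nonneg)
  ultimately show ?thesis by simp
qed

lemma geod_eq:
  fixes q2 p2 q3 p3 :: int
  assumes fn: "\<bar>q2*p3 - q3*p2\<bar> = 1"
  shows "z \<in> geod (q2,p2) (q3,p3) \<longleftrightarrow> 0 < Im z \<and>
     real_of_int (p2*p3) * ((Re z)^2 + (Im z)^2) - real_of_int (q2*p3 + q3*p2) * Re z + real_of_int (q2*q3) = 0"
proof -
  consider "p2 = 0" | "p3 = 0" | "p2 \<noteq> 0" "p3 \<noteq> 0" by blast
  then show ?thesis
  proof cases
    case 1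
    then have "\<bar>q2*p3\<bar> = 1" using fn by simp
    then have h: "q2*p3 = 1 \<or> q2*p3 = -1" by linarith
    have "(Re z = real_of_int q3 / real_of_int p3) \<longleftrightarrow> (- real_of_int (q2*p3) * Re z + real_of_int (q2*q3) = 0)"
    proof -
      have p3: "p3 \<noteq> 0" and q2: "q2 \<noteq> 0" using h by auto
      have e: "- real_of_int (q2*p3) * Re z + real_of_int (q2*q3) = real_of_int q2 * (real_of_int q3 - real_of_int p3 * Re z)"
        by (simp add: algebra_simps)
      have "(Re z = real_of_int q3 / real_of_int p3) \<longleftrightarrow> real_of_int q3 - real_of_int p3 * Re z = 0"
        using p3 by (auto simp: field_simps)
      then show ?thesis unfolding e using q2 by simp
    qed
    then show ?thesis using 1 by (simp add: geod_def)
  next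
    case 2
    then have "\<bar>q3*p2\<bar> = 1" using fn by simp
    then have h: "q3*p2 = 1 \<or> q3*p2 = -1" by linarith
    have "(Re z = real_of_int q2 / real_of_int p2) \<longleftrightarrow> (- real_of_int (q3*p2) * Re z + real_of_int (q2*q3) = 0)"
    proof -
      have p2: "p2 \<noteq> 0" and q3: "q3 \<noteq> 0" using h by auto
      have e: "- real_of_int (q3*p2) * Re z + real_of_int (q2*q3) = real_of_int q3 * (real_of_int q2 - real_of_int p2 * Re z)"
        by (simp add: algebra_simps)
      have "(Re z = real_of_int q2 / real_of_int p2) \<longleftrightarrow> real_of_int q2 - real_of_int p2 * Re z = 0"
        using p2 by (auto simp: field_simps)
      then show ?thesis unfolding e using q3 by simp
    qed
    moreover have "p2 \<noteq> 0" using h by auto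
    ultimately show ?thesis using 2 by (simp add: geod_def)
  next
    case 3
    define x0 where "x0 = real_of_int q2 / real_of_int p2"
    define x1 where "x1 = real_of_int q3 / real_of_int p3"
    have "cmod (z - complex_of_real ((x0 + x1)/2)) = \<bar>x0 - x1\<bar>/2 \<longleftrightarrow>
          (Re z - (x0+x1)/2)^2 + (Im z)^2 = (\<bar>x0 - x1\<bar>/2)^2"
      by (subst cmod_eq_iff) auto
    also have "\<dots> \<longleftrightarrow> (Re z)^2 + (Im z)^2 - (x0 + x1) * Re z + x0 * x1 = 0"
    proof -
      have a2: "(\<bar>x0 - x1\<bar>/2)^2 = (x0 - x1)^2/4" by (simp add: power_divide)
      have "(Re z - (x0+x1)/2)^2 + (Im z)^2 - (\<bar>x0 - x1\<bar>/2)^2 = (Re z)^2 + (Im z)^2 - (x0 + x1) * Re z + x0 * x1"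
        unfolding a2 by (simp add: power2_eq_square field_simps)
      then show ?thesis by (metis eq_iff_diff_eq_0)
    qed
    also have "\<dots> \<longleftrightarrow> real_of_int (p2*p3) * ((Re z)^2 + (Im z)^2 - (x0 + x1) * Re z + x0 * x1) = 0"
      using 3 by simp
    also have "real_of_int (p2*p3) * ((Re z)^2 + (Im z)^2 - (x0 + x1) * Re z + x0 * x1) =
       real_of_int (p2*p3) * ((Re z)^2 + (Im z)^2) - real_of_int (q2*p3 + q3*p2) * Re z + real_of_int (q2*q3)"
      using 3 by (simp add: x0_def x1_def field_simps)
    finally show ?thesis using 3 by (simp add: geod_def x0_def x1_def)
  qed
qed

lemma L_eq:
  fixes q p :: int
  assumes "1 \<le> q" "1 \<le> p"
  shows "z \<in> Lgeo (q,p) \<longleftrightarrow> 0 < Im z \<and> 0 \<le> Re z \<and>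
     real_of_int (p*q) * ((Re z)^2 + (Im z)^2) - real_of_int (q*q - p*p) * Re z - real_of_int (p*q) = 0"
proof -
  define x where "x = real_of_int q / real_of_int p"
  define c where "c = (x^2 - 1) / (2*x)"
  have xp: "x > 0" using assms by (simp add: x_def)
  have "cmod (z - complex_of_real c) = cmod (\<i> - complex_of_real c) \<longleftrightarrow>
        (Re z - c)^2 + (Im z)^2 = (cmod (\<i> - complex_of_real c))^2"
    by (subst cmod_eq_iff) auto
  also have "(cmod (\<i> - complex_of_real c))^2 = c^2 + 1"
    by (simp add: cmod_def power2_eq_square)
  also have "(Re z - c)^2 + (Im z)^2 = c^2 + 1 \<longleftrightarrow> (Re z)^2 + (Im z)^2 - 2*c*Re z - 1 = 0"
    by (simp add: power2_eq_square algebra_simps)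
  also have "\<dots> \<longleftrightarrow> real_of_int (p*q) * ((Re z)^2 + (Im z)^2 - 2*c*Re z - 1) = 0"
    using assms by simp
  also have "real_of_int (p*q) * ((Re z)^2 + (Im z)^2 - 2*c*Re z - 1) =
      real_of_int (p*q) * ((Re z)^2 + (Im z)^2) - real_of_int (q*q - p*p) * Re z - real_of_int (p*q)"
    using assms xp by (simp add: c_def x_def field_simps power2_eq_square)
  finally show ?thesis by (simp add: Lgeo_def Let_def x_def c_def) blast
qed

lemma NC:
  fixes x y z w :: int
  assumes "\<bar>x*w - y*z\<bar> = 1" shows "0 \<le> x*y*z*w"
proof (rule ccontr)
  assume "\<not> ?thesis"
  then have "(x*w)*(y*z) < 0" by (simp add: algebra_simps)
  then have "(0 < x*w \<and> y*z < 0) \<or> (x*w < 0 \<and> 0 < y*z)" by (simp add: mult_less_0_iff)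
  then show False using assms by linarith
qed

lemma INT:
  fixes \<alpha> \<beta> \<gamma> \<delta> A B C E S :: int
  assumes det: "\<bar>\<alpha>*\<delta> - \<beta>*\<gamma>\<bar> = 1" and AB: "1 \<le> A" "1 \<le> B" and C: "0 \<le> C"
    and E: "E = (\<alpha> - \<beta>)*(\<gamma> - \<delta>)" and S: "S = \<alpha>*\<gamma>*A + (\<alpha>*\<delta> + \<beta>*\<gamma>)*C + \<beta>*\<delta>*B"
    and h1: "E*S \<le> 0" and h2: "C*\<bar>E\<bar> \<le> \<bar>S\<bar>" and h3: "E = 0 \<longrightarrow> S = 0"
  shows "(\<alpha> = 0 \<and> \<delta> = 0 \<and> \<bar>\<beta>\<bar> = 1 \<and> \<bar>\<gamma>\<bar> = 1) \<or> (\<beta> = 0 \<and> \<gamma> = 0 \<and> \<bar>\<alpha>\<bar> = 1 \<and> \<bar>\<delta>\<bar> = 1)"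
proof -
  have nc1: "0 \<le> \<alpha>*\<beta>*\<gamma>*\<delta>" using NC[OF det] .
  have d2: "\<bar>(\<alpha>-\<beta>)*\<delta> - \<beta>*(\<gamma>-\<delta>)\<bar> = 1" using det by (simp add: algebra_simps)
  have nc2: "0 \<le> (\<alpha>-\<beta>)*\<beta>*(\<gamma>-\<delta>)*\<delta>" using NC[OF d2] .
  have d3: "\<bar>\<alpha>*(\<delta>-\<gamma>) - (\<beta>-\<alpha>)*\<gamma>\<bar> = 1" using det by (simp add: algebra_simps)
  have nc3: "0 \<le> \<alpha>*(\<beta>-\<alpha>)*\<gamma>*(\<delta>-\<gamma>)" using NC[OF d3] .
  have key: "S + C*E = \<alpha>*\<gamma>*(A + C) + \<beta>*\<delta>*(B + C)" unfolding E S by (simp add: algebra_simps)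
  have nbd: "0 \<le> E * (\<beta>*\<delta>)" using nc2 unfolding E by (simp add: algebra_simps)
  have nag: "0 \<le> E * (\<alpha>*\<gamma>)" using nc3 unfolding E by (simp add: algebra_simps)
  have zero: "\<alpha>*\<gamma> = 0 \<and> \<beta>*\<delta> = 0"
  proof (cases "E = 0")
    case True
    then have S0: "S = 0" using h3 by simp
    from True E have "\<alpha> = \<beta> \<or> \<gamma> = \<delta>" by simp
    then show ?thesis
    proof
      assume ab: "\<alpha> = \<beta>"
      then have "\<bar>\<alpha>*(\<delta> - \<gamma>)\<bar> = 1" using det by (simp add: algebra_simps)
      then have ua: "\<bar>\<alpha>\<bar> = 1" and ud: "\<bar>\<delta> - \<gamma>\<bar> = 1" by (auto simp: abs_mult zmult_eq_1_iff)
      have "\<alpha> * (\<gamma>*(A + C) + \<delta>*(B + C)) = 0" using S0 S ab by (simp add: algebra_simps)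
      then have g: "\<gamma>*(A + C) + \<delta>*(B + C) = 0" using ua by auto
      define s where "s = \<delta> - \<gamma>"
      have "\<gamma>*(A + B + 2*C) = - s*(B + C)" using g by (simp add: s_def algebra_simps)
      moreover have "\<bar>s\<bar> = 1" using ud by (simp add: s_def)
      ultimately have "\<bar>\<gamma>\<bar>*(A + B + 2*C) = B + C"
      proof -
        assume e: "\<gamma>*(A + B + 2*C) = - s*(B + C)" and s1: "\<bar>s\<bar> = 1"
        have "\<bar>\<gamma>*(A + B + 2*C)\<bar> = \<bar>s*(B + C)\<bar>" using e by simp
        then have "\<bar>\<gamma>\<bar>*\<bar>A + B + 2*C\<bar> = \<bar>s\<bar>*\<bar>B + C\<bar>" by (simp add: abs_mult)
        then show ?thesis using s1 AB C by simp
      qed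
      moreover have "\<gamma> = 0 \<or> 1 \<le> \<bar>\<gamma>\<bar>" by auto
      ultimately show ?thesis
      proof (elim disjE)
        assume "\<bar>\<gamma>\<bar>*(A + B + 2*C) = B + C" "\<gamma> = 0" then show ?thesis using AB C by simp
      next
        assume h: "\<bar>\<gamma>\<bar>*(A + B + 2*C) = B + C" "1 \<le> \<bar>\<gamma>\<bar>"
        have "1*(A + B + 2*C) \<le> \<bar>\<gamma>\<bar>*(A + B + 2*C)" using h(2) AB C by (intro mult_right_mono) auto
        then show ?thesis using h(1) AB C by simp
      qed
    next
      assume gd: "\<gamma> = \<delta>"
      then have "\<bar>\<gamma>*(\<alpha> - \<beta>)\<bar> = 1" using det by (simp add: algebra_simps)
      then have ug: "\<bar>\<gamma>\<bar> = 1" and ud: "\<bar>\<alpha> - \<beta>\<bar> = 1" by (auto simp: abs_mult zmult_eq_1_iff)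
      have "\<gamma> * (\<alpha>*(A + C) + \<beta>*(B + C)) = 0" using S0 S gd by (simp add: algebra_simps)
      then have g: "\<alpha>*(A + C) + \<beta>*(B + C) = 0" using ug by auto
      define s where "s = \<alpha> - \<beta>"
      have "\<beta>*(A + B + 2*C) = - s*(A + C)" using g by (simp add: s_def algebra_simps)
      moreover have "\<bar>s\<bar> = 1" using ud by (simp add: s_def)
      ultimately have "\<bar>\<beta>\<bar>*(A + B + 2*C) = A + C"
      proof -
        assume e: "\<beta>*(A + B + 2*C) = - s*(A + C)" and s1: "\<bar>s\<bar> = 1"
        have "\<bar>\<beta>*(A + B + 2*C)\<bar> = \<bar>s*(A + C)\<bar>" using e by simp
        then have "\<bar>\<beta>\<bar>*\<bar>A + B + 2*C\<bar> = \<bar>s\<bar>*\<bar>A + C\<bar>" by (simp add: abs_mult)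
        then show ?thesis using s1 AB C by simp
      qed
      moreover have "\<beta> = 0 \<or> 1 \<le> \<bar>\<beta>\<bar>" by auto
      ultimately show ?thesis
      proof (elim disjE)
        assume "\<bar>\<beta>\<bar>*(A + B + 2*C) = A + C" "\<beta> = 0" then show ?thesis using AB C by simp
      next
        assume h: "\<bar>\<beta>\<bar>*(A + B + 2*C) = A + C" "1 \<le> \<bar>\<beta>\<bar>"
        have "1*(A + B + 2*C) \<le> \<bar>\<beta>\<bar>*(A + B + 2*C)" using h(2) AB C by (intro mult_right_mono) auto
        then show ?thesis using h(1) AB C by simp
      qed
    qed
  next
    case False
    show ?thesis
    proof (cases "E < 0")
      case True
      then have "0 \<le> S" using h1 by (simp add: mult_le_0_iff)
      then have "S + C*E \<ge> 0" using h2 True by (simp add: abs_if)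
      moreover have "\<beta>*\<delta> \<le> 0" using nbd True by (simp add: zero_le_mult_iff)
      moreover have "\<alpha>*\<gamma> \<le> 0" using nag True by (simp add: zero_le_mult_iff)
      moreover have "0 < A + C" "0 < B + C" using AB C by auto
      ultimately show ?thesis using key
        by (smt (verit) mult_nonneg_nonneg mult_nonpos_nonneg mult_pos_pos zero_less_mult_iff mult_eq_0_iff)
    next
      case f2: False
      then have Ep: "0 < E" using False by simp
      then have "S \<le> 0" using h1 by (simp add: mult_le_0_iff)
      then have "S + C*E \<le> 0" using h2 Ep by (simp add: abs_of_pos abs_of_nonpos)
      moreover have "0 \<le> \<beta>*\<delta>" using nbd Ep by (simp add: zero_le_mult_iff)
      moreover have "0 \<le> \<alpha>*\<gamma>" using nag Ep by (simp add: zero_le_mult_iff)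
      moreover have "0 < A + C" "0 < B + C" using AB C by auto
      ultimately show ?thesis using key
        by (smt (verit) mult_nonneg_nonneg mult_nonpos_nonneg mult_pos_pos zero_less_mult_iff mult_eq_0_iff)
    qed
  qed
  show ?thesis
  proof (cases "\<alpha> = 0")
    case True
    then have "\<bar>\<beta>*\<gamma>\<bar> = 1" using det by simp
    then have "\<bar>\<beta>\<bar> = 1" "\<bar>\<gamma>\<bar> = 1" by (auto simp: abs_mult zmult_eq_1_iff)
    then have "\<delta> = 0" using zero by auto
    then show ?thesis using True \<open>\<bar>\<beta>\<bar> = 1\<close> \<open>\<bar>\<gamma>\<bar> = 1\<close> by simp
  next
    case False
    then have "\<gamma> = 0" using zero by simp
    then have "\<bar>\<alpha>*\<delta>\<bar> = 1" using det by simp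
    then have "\<bar>\<alpha>\<bar> = 1" "\<bar>\<delta>\<bar> = 1" by (auto simp: abs_mult zmult_eq_1_iff)
    then have "\<beta> = 0" using zero by auto
    then show ?thesis using \<open>\<gamma> = 0\<close> \<open>\<bar>\<alpha>\<bar> = 1\<close> \<open>\<bar>\<delta>\<bar> = 1\<close> by simp
  qed
qed

lemma coords:
  fixes q0 p0 q1 p1 q2 p2 :: int
  assumes dd: "(q0*p1 - q1*p0)*(q0*p1 - q1*p0) = 1"
  shows "\<exists>\<alpha> \<beta>. q2 = \<alpha>*q0 + \<beta>*q1 \<and> p2 = \<alpha>*p0 + \<beta>*p1"
proof -
  define d where "d = q0*p1 - q1*p0"
  have "(d*(q2*p1 - q1*p2))*q0 + (d*(q0*p2 - q2*p0))*q1 = q2*(d*d)"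
    by (simp add: d_def algebra_simps)
  moreover have "(d*(q2*p1 - q1*p2))*p0 + (d*(q0*p2 - q2*p0))*p1 = p2*(d*d)"
    by (simp add: d_def algebra_simps)
  ultimately show ?thesis using dd unfolding d_def[symmetric] by (metis mult_1_right)
qed

lemma sq1: "x \<noteq> (0::int) \<Longrightarrow> 1 \<le> x*x"
proof -
  assume "x \<noteq> 0"
  then have "0 < x*x" by (auto simp: zero_less_mult_iff linorder_neq_iff)
  then show ?thesis by linarith
qed

lemma crossing:
  fixes q0 p0 q1 p1 q2 p2 q3 p3 q p C :: int and X Y :: real
  assumes qd: "q = q0 + q1" and pd: "p = p0 + p1" and Cd: "C = q0*q1 + p0*p1"
    and nn: "0 \<le> q0" "0 \<le> p0" "0 \<le> q1" "0 \<le> p1" and az: "(q0,p0) \<noteq> (0,0)" "(q1,p1) \<noteq> (0,0)"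
    and qp: "1 \<le> q" "1 \<le> p" and Cpos: "1 \<le> C"
    and det: "\<bar>q0*p1 - q1*p0\<bar> = 1" and f23: "\<bar>q2*p3 - q3*p2\<bar> = 1"
    and Y: "0 < Y" and X: "0 \<le> X"
    and L: "real_of_int (p*q) * (X^2 + Y^2) - real_of_int (q*q - p*p) * X - real_of_int (p*q) = 0"
    and G: "real_of_int (p2*p3) * (X^2 + Y^2) - real_of_int (q2*p3 + q3*p2) * X + real_of_int (q2*q3) = 0"
    and ge: "real_of_int (p*q*C) \<le> X * real_of_int (p*p*C + 1)"
  shows "\<exists>e2 e3. \<bar>e2\<bar> = (1::int) \<and> \<bar>e3\<bar> = 1 \<and>
     ((q2 = e2*q0 \<and> p2 = e2*p0 \<and> q3 = e3*q1 \<and> p3 = e3*p1) \<or>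
      (q2 = e2*q1 \<and> p2 = e2*p1 \<and> q3 = e3*q0 \<and> p3 = e3*p0))"
proof -
  define S where "S = p2*p3 + q2*q3"
  define E where "E = (q*p2 - p*q2)*(q*p3 - p*q3)"
  have id: "real_of_int (p*q) * (real_of_int (p2*p3) * (X^2 + Y^2) - real_of_int (q2*p3 + q3*p2) * X + real_of_int (q2*q3))
      - real_of_int (p2*p3) * (real_of_int (p*q) * (X^2 + Y^2) - real_of_int (q*q - p*p) * X - real_of_int (p*q))
      = real_of_int (E - p*p*S) * X + real_of_int (p*q*S)"
    by (simp add: E_def S_def algebra_simps)
  have eqn: "real_of_int (E - p*p*S) * X + real_of_int (p*q*S) = 0" using id L G by simp
  have rp: "(0::real) < real_of_int p" "(0::real) < real_of_int q" using qp by auto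
  have fac: "(real_of_int p * X - real_of_int q) * (real_of_int q * X + real_of_int p) = - real_of_int (p*q) * Y^2"
    using L by (simp add: algebra_simps power2_eq_square)
  have "- real_of_int (p*q) * Y^2 < 0" using rp Y by simp
  then have neg: "(real_of_int p * X - real_of_int q) * (real_of_int q * X + real_of_int p) < 0" using fac by simp
  have pos: "0 < real_of_int q * X + real_of_int p" using rp X by (simp add: add_nonneg_pos)
  have "real_of_int p * X - real_of_int q < 0"
  proof (rule ccontr)
    assume "\<not> ?thesis"
    then have "0 \<le> (real_of_int p * X - real_of_int q) * (real_of_int q * X + real_of_int p)"
      using pos by (intro mult_nonneg_nonneg) auto
    then show False using neg by simp
  qed
  define t where "t = real_of_int q - real_of_int p * X"
  have tp: "0 < t" using \<open>real_of_int p * X - real_of_int q < 0\<close> by (simp add: t_def)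
  have EX: "real_of_int E * X = - real_of_int p * real_of_int S * t" using eqn by (simp add: t_def algebra_simps)
  have Xge: "real_of_int p * real_of_int C * t \<le> X" using ge by (simp add: t_def algebra_simps)
  have pCt: "0 < real_of_int p * real_of_int C * t" using rp Cpos tp by simp
  have Xp: "0 < X" using Xge pCt by linarith
  have ES: "E*S \<le> 0"
  proof -
    have "real_of_int (E*S) * X = (real_of_int E * X) * real_of_int S" by (simp add: algebra_simps)
    also have "\<dots> = - real_of_int p * (real_of_int S)^2 * t" unfolding EX by (simp add: power2_eq_square algebra_simps)
    also have "\<dots> \<le> 0" using rp tp by (simp add: mult_nonneg_nonneg)
    finally have "real_of_int (E*S) * X \<le> 0" .
    then have "real_of_int (E*S) \<le> 0" using Xp by (smt (verit) mult_pos_pos)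
    then show ?thesis by (simp only: of_int_le_0_iff)
  qed
  have CE: "C*\<bar>E\<bar> \<le> \<bar>S\<bar>"
  proof -
    have a: "\<bar>real_of_int E\<bar> * X = real_of_int p * \<bar>real_of_int S\<bar> * t"
    proof -
      have "\<bar>real_of_int E * X\<bar> = \<bar>- real_of_int p * real_of_int S * t\<bar>" using EX by simp
      then show ?thesis using Xp rp tp by (simp add: abs_mult)
    qed
    have "\<bar>real_of_int E\<bar> * (real_of_int p * real_of_int C * t) \<le> \<bar>real_of_int E\<bar> * X"
      using Xge by (simp add: mult_left_mono)
    then have "(real_of_int C * \<bar>real_of_int E\<bar>) * (real_of_int p * t) \<le> \<bar>real_of_int S\<bar> * (real_of_int p * t)"
      using a by (simp add: algebra_simps)
    then have "real_of_int C * \<bar>real_of_int E\<bar> \<le> \<bar>real_of_int S\<bar>" using rp tp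
      by (simp add: mult_le_cancel_right)
    then show ?thesis by (metis of_int_abs of_int_le_iff of_int_mult)
  qed
  have E0: "E = 0 \<longrightarrow> S = 0"
  proof
    assume "E = 0"
    then have "real_of_int p * real_of_int S * t = 0" using EX by simp
    then show "S = 0" using rp tp by simp
  qed
  have dd: "(q0*p1 - q1*p0)*(q0*p1 - q1*p0) = 1" using det by (metis abs_mult_self_eq mult_1)
  obtain \<alpha> \<beta> where v2: "q2 = \<alpha>*q0 + \<beta>*q1" "p2 = \<alpha>*p0 + \<beta>*p1" using coords[OF dd] by blast
  obtain \<gamma> \<delta> where v3: "q3 = \<gamma>*q0 + \<delta>*q1" "p3 = \<gamma>*p0 + \<delta>*p1" using coords[OF dd] by blast
  have dt: "q2*p3 - q3*p2 = (\<alpha>*\<delta> - \<beta>*\<gamma>)*(q0*p1 - q1*p0)" unfolding v2 v3 by (simp add: algebra_simps)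
  have dabs: "\<bar>\<alpha>*\<delta> - \<beta>*\<gamma>\<bar> = 1" using f23 det unfolding dt by (simp add: abs_mult)
  have Ee: "E = (q0*p1 - q1*p0)*(q0*p1 - q1*p0)*((\<alpha> - \<beta>)*(\<gamma> - \<delta>))"
    unfolding E_def v2 v3 qd pd by (simp add: algebra_simps)
  have Se: "S = \<alpha>*\<gamma>*(q0*q0 + p0*p0) + (\<alpha>*\<delta> + \<beta>*\<gamma>)*C + \<beta>*\<delta>*(q1*q1 + p1*p1)"
    unfolding S_def v2 v3 Cd by (simp add: algebra_simps)
  have A1: "1 \<le> q0*q0 + p0*p0"
  proof -
    have "q0 \<noteq> 0 \<or> p0 \<noteq> 0" using az by auto
    moreover have "0 \<le> q0*q0" "0 \<le> p0*p0" by simp_all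
    ultimately show ?thesis using sq1[of q0] sq1[of p0] by linarith
  qed
  have B1: "1 \<le> q1*q1 + p1*p1"
  proof -
    have "q1 \<noteq> 0 \<or> p1 \<noteq> 0" using az by auto
    moreover have "0 \<le> q1*q1" "0 \<le> p1*p1" by simp_all
    ultimately show ?thesis using sq1[of q1] sq1[of p1] by linarith
  qed
  have R: "(\<alpha> = 0 \<and> \<delta> = 0 \<and> \<bar>\<beta>\<bar> = 1 \<and> \<bar>\<gamma>\<bar> = 1) \<or> (\<beta> = 0 \<and> \<gamma> = 0 \<and> \<bar>\<alpha>\<bar> = 1 \<and> \<bar>\<delta>\<bar> = 1)"
  proof -
    have Ee': "E = (\<alpha> - \<beta>)*(\<gamma> - \<delta>)" using Ee dd by simp
    have C0: "0 \<le> C" using Cpos by simp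
    show ?thesis by (rule INT[OF dabs A1 B1 C0 Ee' Se ES CE E0])
  qed
  then show ?thesis
  proof
    assume h: "\<alpha> = 0 \<and> \<delta> = 0 \<and> \<bar>\<beta>\<bar> = 1 \<and> \<bar>\<gamma>\<bar> = 1"
    then show ?thesis using v2 v3 by (intro exI[of _ \<beta>] exI[of _ \<gamma>]) auto
  next
    assume h: "\<beta> = 0 \<and> \<gamma> = 0 \<and> \<bar>\<alpha>\<bar> = 1 \<and> \<bar>\<delta>\<bar> = 1"
    then show ?thesis using v2 v3 by (intro exI[of _ \<alpha>] exI[of _ \<delta>]) auto
  qed
qed

lemma Qset_mem: "((q,p) \<in> Qset) = (0 \<le> q \<and> 0 \<le> p \<and> coprime q p)"
  by (simp add: Qset_def)

lemma Qset_nz: "(q,p) \<in> Qset \<Longrightarrow> (q,p) \<noteq> (0,0)"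
  by (auto simp: Qset_mem)

lemma Qset_p0: "(q,0) \<in> Qset \<Longrightarrow> q = 1"
  by (auto simp: Qset_mem)

lemma Qset_q0: "(0,p) \<in> Qset \<Longrightarrow> p = 1"
  by (auto simp: Qset_mem)

lemma coprime_det:
  fixes a b c d :: int
  assumes "\<bar>a*d - c*b\<bar> = 1" shows "coprime c d"
proof (rule coprimeI)
  fix k assume "k dvd c" "k dvd d"
  then have "k dvd a*d - c*b" by (simp add: dvd_diff)
  then have "k dvd \<bar>a*d - c*b\<bar>" by simp
  then show "is_unit k" using assms by simp
qed

lemma det_same:
  fixes q p x1 x2 y1 y2 x1' x2' y1' y2' :: int
  assumes q: "1 \<le> q" and p: "1 \<le> p" and cop: "coprime q p"
    and s: "x1 + y1 = q" "x2 + y2 = p" "x1' + y1' = q" "x2' + y2' = p"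
    and nn: "0 \<le> x1" "0 \<le> x2" "0 \<le> y1" "0 \<le> y2" "0 \<le> x1'" "0 \<le> x2'" "0 \<le> y1'" "0 \<le> y2'"
    and nz: "(x1,x2) \<noteq> (0,0)" "(y1,y2) \<noteq> (0,0)" "(x1',x2') \<noteq> (0,0)" "(y1',y2') \<noteq> (0,0)"
    and d: "x1*p - x2*q = x1'*p - x2'*q"
  shows "x1 = x1' \<and> x2 = x2'"
proof -
  define e where "e = x1' - x1"
  define f where "f = x2' - x2"
  have ef: "e*p = f*q" using d by (simp add: e_def f_def algebra_simps)
  have "q dvd e*p" using ef by simp
  then have "q dvd e" using cop by (simp add: coprime_dvd_mult_left_iff)
  then obtain k where k: "e = q*k" by (auto simp: dvd_def)
  have "f = p*k" using ef k q by (simp add: algebra_simps)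
  have "k = 0"
  proof (rule ccontr)
    assume "k \<noteq> 0"
    then consider "1 \<le> k" | "k \<le> -1" by linarith
    then show False
    proof cases
      case 1
      have "q \<le> q*k" "p \<le> p*k" using 1 q p by simp_all
      then have "y1' \<le> 0" "y2' \<le> 0" using s nn k \<open>f = p*k\<close> unfolding e_def f_def by linarith+
      then show False using nz nn by auto
    next
      case 2
      have "q*k \<le> -q" using mult_left_mono[of k "-1" q] 2 q by simp
      have "p*k \<le> -p" using mult_left_mono[of k "-1" p] 2 p by simp
      then have "y1 \<le> 0" "y2 \<le> 0" using \<open>q*k \<le> -q\<close> s nn k \<open>f = p*k\<close> unfolding e_def f_def by linarith+
      then show False using nz nn by auto
    qed
  qed
  then show ?thesis using k \<open>f = p*k\<close> by (simp add: e_def f_def)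
qed

lemma dec_unique:
  assumes "dec \<sigma> a b" "dec \<sigma> a' b'" "\<sigma> \<in> Qset"
  shows "(a' = a \<and> b' = b) \<or> (a' = b \<and> b' = a)"
proof -
  obtain q p where sg: "\<sigma> = (q,p)" by (cases \<sigma>)
  obtain x1 x2 where a: "a = (x1,x2)" by (cases a)
  obtain y1 y2 where b: "b = (y1,y2)" by (cases b)
  obtain x1' x2' where a': "a' = (x1',x2')" by (cases a')
  obtain y1' y2' where b': "b' = (y1',y2')" by (cases b')
  have A: "0 \<le> x1" "0 \<le> x2" "coprime x1 x2" "0 \<le> y1" "0 \<le> y2" "coprime y1 y2"
      "x1 + y1 = q" "x2 + y2 = p" "\<bar>x1*y2 - y1*x2\<bar> = 1"
    using assms(1) unfolding dec_def a b sg by (auto simp: Qset_mem)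
  have B: "0 \<le> x1'" "0 \<le> x2'" "coprime x1' x2'" "0 \<le> y1'" "0 \<le> y2'" "coprime y1' y2'"
      "x1' + y1' = q" "x2' + y2' = p" "\<bar>x1'*y2' - y1'*x2'\<bar> = 1"
    using assms(2) unfolding dec_def a' b' sg by (auto simp: Qset_mem)
  have cop: "coprime q p" using assms(3) sg by (simp add: Qset_mem)
  have nz: "(x1,x2) \<noteq> (0,0)" "(y1,y2) \<noteq> (0,0)" "(x1',x2') \<noteq> (0,0)" "(y1',y2') \<noteq> (0,0)"
    using A B by auto
  have q: "1 \<le> q"
  proof (rule ccontr)
    assume "\<not> ?thesis"
    then have "x1 = 0" "y1 = 0" using A by auto
    then have "x2 = 1" "y2 = 1" using A by auto
    then show False using A cop \<open>\<not> 1 \<le> q\<close> by auto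
  qed
  have p: "1 \<le> p"
  proof (rule ccontr)
    assume "\<not> ?thesis"
    then have "x2 = 0" "y2 = 0" using A by auto
    then have "x1 = 1" "y1 = 1" using A by auto
    then show False using A cop \<open>\<not> 1 \<le> p\<close> by auto
  qed
  have da: "x1*p - x2*q = x1*y2 - y1*x2" using A by (simp add: algebra_simps flip: A(7,8))
  have db: "y1*p - y2*q = -(x1*y2 - y1*x2)" using A by (simp add: algebra_simps flip: A(7,8))
  have da': "x1'*p - x2'*q = x1'*y2' - y1'*x2'" using B by (simp add: algebra_simps flip: B(7,8))
  consider "x1'*y2' - y1'*x2' = x1*y2 - y1*x2" | "x1'*y2' - y1'*x2' = -(x1*y2 - y1*x2)"
    using A(9) B(9) by linarith
  then show ?thesis
  proof cases
    case 1
    have "x1 = x1' \<and> x2 = x2'"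
      by (rule det_same[OF q p cop A(7,8) B(7,8)]) (use A B nz da da' 1 in auto)
    then show ?thesis using A B a b a' b' by auto
  next
    case 2
    have "y1 = x1' \<and> y2 = x2'"
      by (rule det_same[OF q p cop _ _ B(7,8), of y1 x1 y2 x2]) (use A B nz db da' 2 in \<open>auto simp: algebra_simps\<close>)
    then show ?thesis using A B a b a' b' by auto
  qed
qed

lemma base_Qset: "Qzero \<in> Qset" "Qone \<in> Qset" "Qinf \<in> Qset"
  by (auto simp: Qzero_def Qone_def Qinf_def Qset_def)

lemma dec_sum: "dec \<sigma> a b \<Longrightarrow> a + b = \<sigma>" by (simp add: dec_def)

lemma Qset_nonneg: "a \<in> Qset \<Longrightarrow> 0 \<le> fst a \<and> 0 \<le> snd a \<and> a \<noteq> (0,0)"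
  by (cases a) (auto simp: Qset_mem)

lemma dec_sym: "dec \<sigma> a b \<Longrightarrow> dec \<sigma> b a"
  unfolding dec_def by (auto simp: add.commute abs_minus_commute)

lemma dec_Qset: "dec \<sigma> a b \<Longrightarrow> \<sigma> \<in> Qset \<Longrightarrow> \<sigma> \<notin> {Qzero, Qinf}"
proof
  assume d: "dec \<sigma> a b" and "\<sigma> \<in> Qset" and s: "\<sigma> \<in> {Qzero, Qinf}"
  obtain qa pa where a: "a = (qa,pa)" by (cases a)
  obtain qb pb where b: "b = (qb,pb)" by (cases b)
  have A: "0 \<le> qa" "0 \<le> pa" "0 \<le> qb" "0 \<le> pb" "(qa,pa) \<noteq> (0,0)" "(qb,pb) \<noteq> (0,0)" "\<bar>qa*pb - qb*pa\<bar> = 1"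
    "(qa + qb, pa + pb) = \<sigma>"
    using d Qset_nonneg[of a] Qset_nonneg[of b] unfolding dec_def a b by auto
  show False using s A by (auto simp: Qzero_def Qinf_def)
qed

lemma Qset_cases: "(q,p) \<in> Qset \<Longrightarrow> (q = 1 \<and> p = 0) \<or> (q = 0 \<and> p = 1) \<or> (1 \<le> q \<and> 1 \<le> p)"
proof -
  assume h: "(q,p) \<in> Qset"
  then have n: "0 \<le> q" "0 \<le> p" "(q,p) \<noteq> (0,0)" using Qset_nonneg[of "(q,p)"] by auto
  show ?thesis
  proof (cases "p = 0")
    case True then show ?thesis using h Qset_p0[of q] by auto
  next
    case False
    show ?thesis
    proof (cases "q = 0")
      case True then show ?thesis using h Qset_q0[of p] by auto
    next
      case False then show ?thesis using \<open>p \<noteq> 0\<close> n by auto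
    qed
  qed
qed

definition sw :: "int \<times> int \<Rightarrow> int \<times> int" where "sw x = (snd x, fst x)"

lemma sw_sw[simp]: "sw (sw x) = x" by (simp add: sw_def)
lemma sw_diff: "sw (x - y) = sw x - sw y" by (simp add: sw_def)
lemma sw_J: "(sw x \<in> J (p,q)) = (x \<in> J (q,p))"
  by (cases x) (simp add: sw_def J_swap[symmetric])
lemma sw_Lambda: "(sw l \<in> Lambda) = (l \<in> Lambda)"
  by (cases l) (auto simp: sw_def Lambda_def)

lemma dec_one: "dec Qone s0 s1 \<Longrightarrow> (s0 = (0,1) \<and> s1 = (1,0)) \<or> (s0 = (1,0) \<and> s1 = (0,1))"
proof -
  assume d: "dec Qone s0 s1"
  obtain a b where a: "s0 = (a,b)" by (cases s0)
  obtain c e where b: "s1 = (c,e)" by (cases s1)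
  have h: "a + c = 1" "b + e = 1" using d a b by (auto simp: dec_def Qone_def)
  have n: "0 \<le> a" "0 \<le> b" "0 \<le> c" "0 \<le> e" "(a,b) \<noteq> (0,0)" "(c,e) \<noteq> (0,0)"
    using d a b Qset_nonneg[of s0] Qset_nonneg[of s1] by (auto simp: dec_def)
  show ?thesis using h n a b by auto
qed


lemma C_pos:
  assumes d: "dec \<sigma> a b" and ne: "\<sigma> \<noteq> Qone"
  shows "1 \<le> fst a * fst b + snd a * snd b"
proof (rule ccontr)
  assume nC: "\<not> ?thesis"
  obtain q0 p0 where a: "a = (q0,p0)" by (cases a)
  obtain q1 p1 where b: "b = (q1,p1)" by (cases b)
  have Q: "(q0,p0) \<in> Qset" "(q1,p1) \<in> Qset" using d a b by (auto simp: dec_def)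
  have nn: "0 \<le> q0" "0 \<le> p0" "0 \<le> q1" "0 \<le> p1" using Q Qset_nonneg by fastforce+
  have "q0*q1 + p0*p1 \<le> 0" using nC a b by simp
  moreover have "0 \<le> q0*q1" "0 \<le> p0*p1" using nn by simp_all
  ultimately have z: "q0*q1 = 0" "p0*p1 = 0" by linarith+
  have sg: "\<sigma> = (q0+q1, p0+p1)" using d a b by (auto simp: dec_def)
  consider "q0 = 0" | "q1 = 0" using z by auto
  then show False
  proof cases
    case 1
    then have "p0 = 1" using Q Qset_q0 by simp
    then have "p1 = 0" using z by simp
    then have "q1 = 1" using Q Qset_p0 by simp
    then show False using ne sg 1 \<open>p0 = 1\<close> \<open>p1 = 0\<close> by (simp add: Qone_def)
  next
    case 2
    then have "p1 = 1" using Q Qset_q0 by simp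
    then have "p0 = 0" using z by simp
    then have "q0 = 1" using Q Qset_p0 by simp
    then show False using ne sg 2 \<open>p1 = 1\<close> \<open>p0 = 0\<close> by (simp add: Qone_def)
  qed
qed

definition Xs :: "int \<times> int \<Rightarrow> int \<times> int \<Rightarrow> int \<times> int \<Rightarrow> real" where
  "Xs \<sigma> a b = real_of_int (snd \<sigma> * fst \<sigma> * (fst a * fst b + snd a * snd b)) /
                real_of_int (snd \<sigma> * snd \<sigma> * (fst a * fst b + snd a * snd b) + 1)"

lemma sigma_big: "\<sigma> \<in> Qset \<Longrightarrow> \<sigma> \<notin> {Qzero, Qone, Qinf} \<Longrightarrow> 1 \<le> fst \<sigma> \<and> 1 \<le> snd \<sigma>"
proof -
  assume h: "\<sigma> \<in> Qset" "\<sigma> \<notin> {Qzero, Qone, Qinf}"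
  obtain q p where s: "\<sigma> = (q,p)" by (cases \<sigma>)
  show ?thesis using Qset_cases[of q p] h s by (auto simp: Qzero_def Qone_def Qinf_def)
qed

lemma edge_exists:
  assumes s: "\<sigma> \<in> Qset" "\<sigma> \<notin> {Qzero, Qone, Qinf}" and d: "dec \<sigma> a b"
  shows "\<exists>z. z \<in> Lgeo \<sigma> \<and> z \<in> geod a b \<and> Re z = Xs \<sigma> a b"
proof -
  obtain q p where sg: "\<sigma> = (q,p)" by (cases \<sigma>)
  obtain q0 p0 where a: "a = (q0,p0)" by (cases a)
  obtain q1 p1 where b: "b = (q1,p1)" by (cases b)
  have qp: "1 \<le> q" "1 \<le> p" using sigma_big[OF s] sg by auto
  have sums: "q = q0 + q1" "p = p0 + p1" using d a b sg by (auto simp: dec_def)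
  have det: "\<bar>q0*p1 - q1*p0\<bar> = 1" using d a b by (simp add: dec_def)
  define C where "C = q0*q1 + p0*p1"
  have Cp: "1 \<le> C" using C_pos[OF d] s a b by (auto simp: C_def)
  define X where "X = real_of_int (p*q*C) / real_of_int (p*p*C + 1)"
  have den: "(0::real) < real_of_int (p*p*C + 1)" using qp Cp by (simp add: add_pos_nonneg)
  have Xe: "X * real_of_int (p*p*C + 1) = real_of_int (p*q*C)" using den by (simp add: X_def)
  have X0: "0 \<le> X" using qp Cp den by (simp add: X_def)
  define N where "N = (real_of_int (q*q - p*p) * X + real_of_int (p*q)) / real_of_int (p*q)"
  have pq0: "(0::real) < real_of_int (p*q)" using qp by simp
  have Ne: "real_of_int (p*q) * N = real_of_int (q*q - p*p) * X + real_of_int (p*q)"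
  proof -
    have "real_of_int (p*q) \<noteq> 0" using pq0 by linarith
    then show ?thesis unfolding N_def by simp
  qed
  have pXq: "real_of_int p * X < real_of_int q"
  proof -
    have "real_of_int p * X * real_of_int (p*p*C + 1) = real_of_int p * real_of_int (p*q*C)" using Xe by (metis mult.assoc)
    also have "\<dots> < real_of_int q * real_of_int (p*p*C + 1)" using qp by (simp add: algebra_simps)
    finally show ?thesis using den by simp
  qed
  have NX: "X^2 < N"
  proof -
    have "real_of_int (p*q) * (N - X^2) = - (real_of_int p * X - real_of_int q) * (real_of_int q * X + real_of_int p)"
      using Ne by (simp add: algebra_simps power2_eq_square)
    moreover have "0 < - (real_of_int p * X - real_of_int q) * (real_of_int q * X + real_of_int p)"
      using pXq qp X0 by (intro mult_pos_pos) (auto simp: add_nonneg_pos)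
    ultimately have "0 < real_of_int (p*q) * (N - X^2)" by simp
    then show ?thesis using pq0 by (smt (verit) mult_pos_pos zero_less_mult_iff)
  qed
  define Y where "Y = sqrt (N - X^2)"
  have Y0: "0 < Y" using NX by (simp add: Y_def)
  have YY: "Y^2 = N - X^2" using NX by (simp add: Y_def)
  define z where "z = Complex X Y"
  have zL: "z \<in> Lgeo \<sigma>"
    unfolding sg L_eq[OF qp] using Y0 X0 Ne YY by (simp add: z_def)
  have dd: "(q0*p1 - q1*p0)*(q0*p1 - q1*p0) = 1" using det by (metis abs_mult_self_eq mult_1)
  have Eab: "(q*p0 - p*q0)*(q*p1 - p*q1) = -1"
  proof -
    have "(q*p0 - p*q0)*(q*p1 - p*q1) = - ((q0*p1 - q1*p0)*(q0*p1 - q1*p0))" unfolding sums by (simp add: algebra_simps)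
    then show ?thesis using dd by simp
  qed
  have G: "real_of_int (p0*p1) * N - real_of_int (q0*p1 + q1*p0) * X + real_of_int (q0*q1) = 0"
  proof -
    have id: "real_of_int (p*q) * (real_of_int (p0*p1) * N - real_of_int (q0*p1 + q1*p0) * X + real_of_int (q0*q1))
        - real_of_int (p0*p1) * (real_of_int (p*q) * N - real_of_int (q*q - p*p) * X - real_of_int (p*q))
        = real_of_int ((q*p0 - p*q0)*(q*p1 - p*q1) - p*p*(p0*p1 + q0*q1)) * X + real_of_int (p*q*(p0*p1 + q0*q1))"
      by (simp add: algebra_simps)
    have "real_of_int ((q*p0 - p*q0)*(q*p1 - p*q1) - p*p*(p0*p1 + q0*q1)) * X + real_of_int (p*q*(p0*p1 + q0*q1)) = 0"
    proof -
      have c: "p0*p1 + q0*q1 = C" by (simp add: C_def)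
      have i1: "(q*p0 - p*q0)*(q*p1 - p*q1) - p*p*(p0*p1 + q0*q1) = -(p*p*C + 1)" using Eab c by simp
      have i2: "p*q*(p0*p1 + q0*q1) = p*q*C" using c by simp
      have "real_of_int (-(p*p*C + 1)) * X + real_of_int (p*q*C) = - (X * real_of_int (p*p*C + 1)) + real_of_int (p*q*C)"
        by (simp only: of_int_minus mult_minus_left mult.commute)
      also have "\<dots> = 0" using Xe by simp
      finally show ?thesis unfolding i1 i2 .
    qed
    then have "real_of_int (p*q) * (real_of_int (p0*p1) * N - real_of_int (q0*p1 + q1*p0) * X + real_of_int (q0*q1)) = 0"
      using id Ne by simp
    then show ?thesis using qp by simp
  qed
  have zG: "z \<in> geod a b"
    unfolding a b geod_eq[OF det] using Y0 G YY by (simp add: z_def)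
  have "Re z = Xs \<sigma> a b" by (simp add: z_def X_def Xs_def sg a b C_def mult.commute)
  then show ?thesis using zL zG by blast
qed

lemma edge_unique:
  assumes s: "\<sigma> \<in> Qset" "\<sigma> \<notin> {Qzero, Qone, Qinf}" and d: "dec \<sigma> a b"
    and fn: "farey_nbr v2 v3" and zL: "z \<in> Lgeo \<sigma>" and zG: "z \<in> geod v2 v3" and ge: "Xs \<sigma> a b \<le> Re z"
  shows "\<exists>e2 e3. \<bar>e2\<bar> = (1::int) \<and> \<bar>e3\<bar> = 1 \<and>
     ((v2 = (e2 * fst a, e2 * snd a) \<and> v3 = (e3 * fst b, e3 * snd b)) \<or>
      (v2 = (e2 * fst b, e2 * snd b) \<and> v3 = (e3 * fst a, e3 * snd a)))"
proof -
  obtain q p where sg: "\<sigma> = (q,p)" by (cases \<sigma>)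
  obtain q0 p0 where a: "a = (q0,p0)" by (cases a)
  obtain q1 p1 where b: "b = (q1,p1)" by (cases b)
  obtain q2 p2 where v2: "v2 = (q2,p2)" by (cases v2)
  obtain q3 p3 where v3: "v3 = (q3,p3)" by (cases v3)
  have qp: "1 \<le> q" "1 \<le> p" using sigma_big[OF s] sg by auto
  have sums: "q = q0 + q1" "p = p0 + p1" using d a b sg by (auto simp: dec_def)
  have det: "\<bar>q0*p1 - q1*p0\<bar> = 1" using d a b by (simp add: dec_def)
  have Q: "(q0,p0) \<in> Qset" "(q1,p1) \<in> Qset" using d a b by (auto simp: dec_def)
  have nn: "0 \<le> q0" "0 \<le> p0" "0 \<le> q1" "0 \<le> p1" using Q Qset_nonneg by fastforce+
  have az: "(q0,p0) \<noteq> (0,0)" "(q1,p1) \<noteq> (0,0)" using Q Qset_nonneg by fastforce+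
  define C where "C = q0*q1 + p0*p1"
  have Cp: "1 \<le> C" using C_pos[OF d] s a b by (auto simp: C_def)
  have f23: "\<bar>q2*p3 - q3*p2\<bar> = 1" using fn v2 v3 by (simp add: farey_nbr_def)
  have Lz: "0 < Im z" "0 \<le> Re z"
    "real_of_int (p*q) * ((Re z)^2 + (Im z)^2) - real_of_int (q*q - p*p) * Re z - real_of_int (p*q) = 0"
    using zL unfolding sg L_eq[OF qp] by auto
  have Gz: "real_of_int (p2*p3) * ((Re z)^2 + (Im z)^2) - real_of_int (q2*p3 + q3*p2) * Re z + real_of_int (q2*q3) = 0"
    using zG unfolding v2 v3 geod_eq[OF f23] by auto
  have den: "(0::real) < real_of_int (p*p*C + 1)" using qp Cp by (simp add: add_pos_nonneg)
  have ge': "real_of_int (p*q*C) \<le> Re z * real_of_int (p*p*C + 1)"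
  proof -
    have "Xs \<sigma> a b = real_of_int (p*q*C) / real_of_int (p*p*C + 1)" by (simp add: Xs_def sg a b C_def mult.commute)
    then show ?thesis using ge den by (simp add: divide_le_eq)
  qed
  obtain e2 e3 where e: "\<bar>e2\<bar> = (1::int)" "\<bar>e3\<bar> = 1"
     "(q2 = e2*q0 \<and> p2 = e2*p0 \<and> q3 = e3*q1 \<and> p3 = e3*p1) \<or> (q2 = e2*q1 \<and> p2 = e2*p1 \<and> q3 = e3*q0 \<and> p3 = e3*p0)"
    using crossing[OF sums C_def nn az qp Cp det f23 Lz(1) Lz(2) Lz(3) Gz ge'] by blast
  show ?thesis using e v2 v3 a b by (intro exI[of _ e2] exI[of _ e3]) auto
qed

lemma geod_sign:
  fixes q0 p0 q1 p1 e2 e3 :: int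
  assumes det: "\<bar>q0*p1 - q1*p0\<bar> = 1" and e: "\<bar>e2\<bar> = 1" "\<bar>e3\<bar> = 1"
  shows "geod (e2*q0, e2*p0) (e3*q1, e3*p1) = geod (q0,p0) (q1,p1)"
    "geod (e2*q1, e2*p1) (e3*q0, e3*p0) = geod (q0,p0) (q1,p1)"
proof -
  have ee: "e2*e3 = 1 \<or> e2*e3 = -1" using e by (auto simp: abs_if split: if_splits)
  have "(e2*q0)*(e3*p1) - (e3*q1)*(e2*p0) = (e2*e3)*(q0*p1 - q1*p0)" by (simp add: algebra_simps)
  then have d1: "\<bar>(e2*q0)*(e3*p1) - (e3*q1)*(e2*p0)\<bar> = 1" using det e by (simp add: abs_mult)
  have "(e2*q1)*(e3*p0) - (e3*q0)*(e2*p1) = -((e2*e3)*(q0*p1 - q1*p0))" by (simp add: algebra_simps)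
  then have d2: "\<bar>(e2*q1)*(e3*p0) - (e3*q0)*(e2*p1)\<bar> = 1" using det e by (simp add: abs_mult)
  have nz: "real_of_int (e2*e3) \<noteq> 0" using ee by auto
  have k1: "\<And>x y. real_of_int ((e2*p0)*(e3*p1)) * y - real_of_int ((e2*q0)*(e3*p1) + (e3*q1)*(e2*p0)) * x + real_of_int ((e2*q0)*(e3*q1))
      = real_of_int (e2*e3) * (real_of_int (p0*p1) * y - real_of_int (q0*p1 + q1*p0) * x + real_of_int (q0*q1))"
    by (simp add: algebra_simps)
  have k2: "\<And>x y. real_of_int ((e2*p1)*(e3*p0)) * y - real_of_int ((e2*q1)*(e3*p0) + (e3*q0)*(e2*p1)) * x + real_of_int ((e2*q1)*(e3*q0))
      = real_of_int (e2*e3) * (real_of_int (p0*p1) * y - real_of_int (q0*p1 + q1*p0) * x + real_of_int (q0*q1))"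
    by (simp add: algebra_simps)
  show "geod (e2*q0, e2*p0) (e3*q1, e3*p1) = geod (q0,p0) (q1,p1)"
    unfolding set_eq_iff geod_eq[OF d1] geod_eq[OF det] k1 using nz by simp
  show "geod (e2*q1, e2*p1) (e3*q0, e3*p0) = geod (q0,p0) (q1,p1)"
    unfolding set_eq_iff geod_eq[OF d2] geod_eq[OF det] k2 using nz by simp
qed

lemma first_edge_of_dec:
  assumes s: "\<sigma> \<in> Qset" "\<sigma> \<notin> {Qzero, Qone, Qinf}" and d: "dec \<sigma> a b"
  shows "first_edge \<sigma> a b"
proof -
  obtain q0 p0 where a: "a = (q0,p0)" by (cases a)
  obtain q1 p1 where b: "b = (q1,p1)" by (cases b)
  have det: "\<bar>q0*p1 - q1*p0\<bar> = 1" using d a b by (simp add: dec_def)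
  have fn: "farey_nbr a b" using det a b by (simp add: farey_nbr_def)
  obtain z where z: "z \<in> Lgeo \<sigma>" "z \<in> geod a b" "Re z = Xs \<sigma> a b" using edge_exists[OF s d] by blast
  have allp: "\<forall>a' b' z'. farey_nbr a' b' \<and> geod a' b' \<noteq> geod a b \<and> z' \<in> Lgeo \<sigma> \<inter> geod a' b' \<longrightarrow> Re z' < Re z"
  proof (intro allI impI)
    fix a' b' z' assume h: "farey_nbr a' b' \<and> geod a' b' \<noteq> geod a b \<and> z' \<in> Lgeo \<sigma> \<inter> geod a' b'"
    show "Re z' < Re z"
    proof (rule ccontr)
      assume "\<not> Re z' < Re z"
      then have ge: "Xs \<sigma> a b \<le> Re z'" using z(3) by simp
      obtain e2 e3 where e: "\<bar>e2\<bar> = (1::int)" "\<bar>e3\<bar> = 1"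
        "(a' = (e2 * fst a, e2 * snd a) \<and> b' = (e3 * fst b, e3 * snd b)) \<or>
         (a' = (e2 * fst b, e2 * snd b) \<and> b' = (e3 * fst a, e3 * snd a))"
        using edge_unique[OF s d _ _ _ ge, of a' b'] h by blast
      have "geod a' b' = geod a b" using e geod_sign[OF det e(1,2)] a b by auto
      then show False using h by simp
    qed
  qed
  have A: "a \<in> Qset" "b \<in> Qset" using d by (auto simp: dec_def)
  have "z \<in> Lgeo \<sigma> \<inter> geod a b" using z by simp
  then show ?thesis unfolding first_edge_def using A fn allp by blast
qed

lemma sign_pos:
  assumes "a \<in> Qset" "c \<in> Qset" "\<bar>e\<bar> = (1::int)" "a = (e * fst c, e * snd c)"
  shows "e = 1"
proof (rule ccontr)
  assume "e \<noteq> 1"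
  then have "e = -1" using assms(3) by auto
  then have "fst a = - fst c" "snd a = - snd c" using assms(4) by auto
  moreover have "0 \<le> fst a" "0 \<le> snd a" "0 \<le> fst c" "0 \<le> snd c" "c \<noteq> (0,0)"
    using assms(1,2) Qset_nonneg by blast+
  ultimately show False by (auto simp: prod_eq_iff)
qed

lemma dec_exists: "\<sigma> \<in> Qset \<Longrightarrow> \<sigma> \<notin> {Qzero, Qone, Qinf} \<Longrightarrow> \<exists>a b. dec \<sigma> a b"
proof -
  assume s: "\<sigma> \<in> Qset" "\<sigma> \<notin> {Qzero, Qone, Qinf}"
  obtain q p where sg: "\<sigma> = (q,p)" by (cases \<sigma>)
  have qp: "1 \<le> q" "1 \<le> p" using sigma_big[OF s] sg by auto
  have cop: "coprime q p" using s sg by (simp add: Qset_mem)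
  obtain u v where uv: "u*q + v*p = gcd q p" using bezout_int by blast
  then have uv1: "u*q + v*p = 1" using cop by simp
  obtain p0 where p0: "1 \<le> p0" "p0 \<le> p" "p dvd q*p0 - 1"
  proof (cases "u mod p = 0")
    case True
    then obtain k where "u = p*k" by (auto simp: dvd_eq_mod_eq_0[symmetric] dvd_def)
    then have "p*(k*q + v) = 1" using uv1 by (simp add: algebra_simps)
    then have "p = 1" using qp by (simp add: zmult_eq_1_iff)
    then show ?thesis using that[of 1] by simp
  next
    case False
    have r: "0 \<le> u mod p" "u mod p < p" using qp by auto
    have "q*(u mod p) - 1 = q*u - 1 - q*p*(u div p)" by (simp add: algebra_simps minus_div_mult_eq_mod[symmetric])
    also have "\<dots> = p*(- v - q*(u div p))" using uv1 by (simp add: algebra_simps)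
    finally have "p dvd q*(u mod p) - 1" by simp
    then show ?thesis using that[of "u mod p"] False r by auto
  qed
  obtain q0 where q0: "q*p0 - 1 = p*q0" using p0(3) by (auto simp: dvd_def)
  have q0n: "0 \<le> q0"
  proof -
    have "0 \<le> q*p0 - 1" using qp p0 by (smt (verit) mult_le_cancel_left1 mult_nonneg_nonneg)
    then have "0 \<le> p*q0" using q0 by simp
    then show ?thesis using qp by (simp add: zero_le_mult_iff)
  qed
  have q0l: "q0 \<le> q"
  proof -
    have "q*p0 \<le> q*p" using p0 qp by simp
    then have "p*q0 < p*q" using q0 by (simp add: algebra_simps)
    then show ?thesis using qp by simp
  qed
  have det: "\<bar>q0*(p - p0) - (q - q0)*p0\<bar> = 1" using q0 by (simp add: algebra_simps)
  have c1: "coprime (q - q0) (p - p0)" by (rule coprime_det[OF det])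
  have det2: "\<bar>(q - q0)*p0 - q0*(p - p0)\<bar> = 1" using det by (simp add: abs_minus_commute)
  have c0: "coprime q0 p0" by (rule coprime_det[OF det2])
  have "dec \<sigma> (q0,p0) (q - q0, p - p0)"
    unfolding dec_def using c0 c1 q0n q0l p0 det sg by (simp add: Qset_mem)
  then show ?thesis by blast
qed

lemma first_edge_imp_dec:
  assumes s: "\<sigma> \<in> Qset" "\<sigma> \<notin> {Qzero, Qone, Qinf}" and fe: "first_edge \<sigma> a b"
  shows "dec \<sigma> a b"
proof -
  obtain a0 b0 where d0: "dec \<sigma> a0 b0" using dec_exists[OF s] by blast
  obtain z0 where z0: "z0 \<in> Lgeo \<sigma>" "z0 \<in> geod a0 b0" "Re z0 = Xs \<sigma> a0 b0" using edge_exists[OF s d0] by blast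
  have Q: "a \<in> Qset" "b \<in> Qset" and fn: "farey_nbr a b" using fe by (auto simp: first_edge_def)
  obtain z where z: "z \<in> Lgeo \<sigma>" "z \<in> geod a b"
    and P: "\<forall>a' b' z'. farey_nbr a' b' \<and> geod a' b' \<noteq> geod a b \<and> z' \<in> Lgeo \<sigma> \<inter> geod a' b' \<longrightarrow> Re z' < Re z"
    using fe unfolding first_edge_def by blast
  have fn0: "farey_nbr a0 b0" using d0 by (cases a0, cases b0) (simp add: dec_def farey_nbr_def)
  obtain w where w: "w \<in> Lgeo \<sigma>" "w \<in> geod a b" "Xs \<sigma> a0 b0 \<le> Re w"
  proof (cases "geod a0 b0 = geod a b")
    case True then show ?thesis using that[of z0] z0 by simp
  next
    case False
    then have "Re z0 < Re z" using P fn0 z0 by blast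
    then show ?thesis using that[of z] z z0 by simp
  qed
  obtain e2 e3 where e: "\<bar>e2\<bar> = (1::int)" "\<bar>e3\<bar> = 1"
    "(a = (e2 * fst a0, e2 * snd a0) \<and> b = (e3 * fst b0, e3 * snd b0)) \<or>
     (a = (e2 * fst b0, e2 * snd b0) \<and> b = (e3 * fst a0, e3 * snd a0))"
    using edge_unique[OF s d0 fn w] by blast
  have Q0: "a0 \<in> Qset" "b0 \<in> Qset" using d0 by (auto simp: dec_def)
  from e(3) show ?thesis
  proof
    assume h: "a = (e2 * fst a0, e2 * snd a0) \<and> b = (e3 * fst b0, e3 * snd b0)"
    then have "e2 = 1" "e3 = 1" using sign_pos Q Q0 e(1,2) by blast+
    then show ?thesis using h d0 by simp
  next
    assume h: "a = (e2 * fst b0, e2 * snd b0) \<and> b = (e3 * fst a0, e3 * snd a0)"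
    then have "e2 = 1" "e3 = 1" using sign_pos Q Q0 e(1,2) by blast+
    then show ?thesis using h dec_sym[OF d0] by simp
  qed
qed

lemma parents_iff: "\<sigma> \<in> Qset \<Longrightarrow> is_parents \<sigma> a b \<longleftrightarrow> dec \<sigma> a b"
proof
  assume s: "\<sigma> \<in> Qset" and ip: "is_parents \<sigma> a b"
  have d1: "dec Qone Qzero Qinf"
    using base_Qset by (simp add: dec_def Qzero_def Qone_def Qinf_def)
  from ip show "dec \<sigma> a b"
    unfolding is_parents_def
  proof (elim disjE conjE)
    assume "\<sigma> = Qone" "{a, b} = {Qzero, Qinf}"
    then show ?thesis using d1 dec_sym[OF d1] by (auto simp: doubleton_eq_iff)
  next
    assume "\<sigma> \<in> Qset" "\<sigma> \<notin> {Qzero, Qone, Qinf}" "first_edge \<sigma> a b"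
    then show ?thesis using first_edge_imp_dec by blast
  qed
next
  assume s: "\<sigma> \<in> Qset" and d: "dec \<sigma> a b"
  show "is_parents \<sigma> a b"
  proof (cases "\<sigma> = Qone")
    case True
    then have "(a = (0,1) \<and> b = (1,0)) \<or> (a = (1,0) \<and> b = (0,1))" using dec_one d by simp
    then show ?thesis using True by (auto simp: is_parents_def Qzero_def Qinf_def)
  next
    case False
    then have "\<sigma> \<notin> {Qzero, Qone, Qinf}" using dec_Qset[OF d s] by auto
    then show ?thesis using first_edge_of_dec[OF s _ d] s by (simp add: is_parents_def)
  qed
qed



lemma parents_Qset: "is_parents \<sigma> a b \<Longrightarrow> a \<in> Qset \<and> b \<in> Qset"
  unfolding is_parents_def first_edge_def using base_Qset by (auto simp: doubleton_eq_iff)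

lemma isF_unique: "isF \<sigma> f \<Longrightarrow> isF \<sigma> g \<Longrightarrow> f = g"
proof (induction arbitrary: g rule: isF.induct)
  case (base \<sigma>)
  from base.prems show ?case
  proof cases
    case base then show ?thesis by simp
  next
    case (step \<sigma>0 \<sigma>1 \<sigma>' f0 f1 f') then show ?thesis using base.hyps by simp
  qed
next
  case (step \<sigma> \<sigma>0 \<sigma>1 \<sigma>' f0 f1 f')
  note IH = step.IH
  from step.prems show ?case
  proof cases
    case base then show ?thesis using step.hyps by simp
  next
    case (step \<tau>0 \<tau>1 \<tau>' g0 g1 g')
    have Q1: "\<sigma>1 \<in> Qset" "\<tau>1 \<in> Qset" using parents_Qset step.hyps(3) \<open>is_parents \<sigma> \<tau>0 \<tau>1\<close> by auto
    have d1: "dec \<sigma> \<sigma>0 \<sigma>1" "dec \<sigma>1 \<sigma>0 \<sigma>'" using parents_iff step.hyps Q1 by auto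
    have d2: "dec \<sigma> \<tau>0 \<tau>1" "dec \<tau>1 \<tau>0 \<tau>'" using parents_iff step Q1 by auto
    have "(\<tau>0 = \<sigma>0 \<and> \<tau>1 = \<sigma>1) \<or> (\<tau>0 = \<sigma>1 \<and> \<tau>1 = \<sigma>0)"
      using dec_unique[OF d1(1) d2(1)] step.hyps(1) by auto
    moreover have "\<not> (\<tau>0 = \<sigma>1 \<and> \<tau>1 = \<sigma>0)"
    proof
      assume h: "\<tau>0 = \<sigma>1 \<and> \<tau>1 = \<sigma>0"
      have e1: "\<sigma>0 + \<sigma>' = \<sigma>1" using d1(2) by (simp add: dec_def)
      have e2: "\<sigma>1 + \<tau>' = \<sigma>0" using d2(2) h by (simp add: dec_def)
      have n: "0 \<le> fst \<sigma>'" "0 \<le> snd \<sigma>'" "0 \<le> fst \<tau>'" "0 \<le> snd \<tau>'" "\<sigma>' \<noteq> (0,0)"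
        using d1(2) d2(2) Qset_nonneg by (auto simp: dec_def)
      have "fst \<sigma>' + fst \<tau>' = 0" "snd \<sigma>' + snd \<tau>' = 0"
        using e1 e2 by (auto simp: prod_eq_iff)
      then have "\<sigma>' = (0,0)" using n by (auto simp: prod_eq_iff)
      then show False using n by simp
    qed
    ultimately have t: "\<tau>0 = \<sigma>0" "\<tau>1 = \<sigma>1" by auto
    have "\<tau>' = \<sigma>'"
    proof -
      have "\<sigma>0 + \<sigma>' = \<sigma>1" "\<sigma>0 + \<tau>' = \<sigma>1" using d1(2) d2(2) t by (auto simp: dec_def)
      then show ?thesis by (metis add_left_cancel)
    qed
    then have "f0 = g0" "f1 = g1" "f' = g'" using IH step t by auto
    then show ?thesis using step by simp
  qed
qed

lemma dominate:
  assumes d: "dec \<sigma> a b" and ne: "\<sigma> \<noteq> Qone"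
  shows "(fst a \<le> fst b \<and> snd a \<le> snd b) \<or> (fst b \<le> fst a \<and> snd b \<le> snd a)"
proof (rule ccontr)
  obtain qa pa where a: "a = (qa,pa)" by (cases a)
  obtain qb pb where b: "b = (qb,pb)" by (cases b)
  have A: "0 \<le> qa" "0 \<le> pa" "0 \<le> qb" "0 \<le> pb" "coprime qa pa" "coprime qb pb" "\<bar>qa*pb - qb*pa\<bar> = 1"
    using d unfolding dec_def a b by (auto simp: Qset_mem)
  assume "\<not> ?thesis"
  then consider "qb + 1 \<le> qa" "pa + 1 \<le> pb" | "qa + 1 \<le> qb" "pb + 1 \<le> pa" using a b by auto
  then show False
  proof cases
    case 1
    have "(qb+1)*(pa+1) \<le> qa*pb" using 1 A by (intro mult_mono) auto
    then have "qb = 0" "pa = 0" using A by (auto simp: algebra_simps)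
    then have "qa = 1" "pb = 1" using A by auto
    then show False using ne d \<open>qb = 0\<close> \<open>pa = 0\<close> unfolding dec_def a b Qone_def by auto
  next
    case 2
    have "(qa+1)*(pb+1) \<le> qb*pa" using 2 A by (intro mult_mono) auto
    then have "qa = 0" "pb = 0" using A by (auto simp: algebra_simps)
    then have "qb = 1" "pa = 1" using A by auto
    then show False using ne d \<open>qa = 0\<close> \<open>pb = 0\<close> unfolding dec_def a b Qone_def by auto
  qed
qed

lemma dec_child:
  assumes d: "dec \<sigma> s0 s1" and le: "fst s0 \<le> fst s1" "snd s0 \<le> snd s1"
  shows "dec s1 s0 (s1 - s0)"
proof -
  obtain q0 p0 where a: "s0 = (q0,p0)" by (cases s0)
  obtain q1 p1 where b: "s1 = (q1,p1)" by (cases s1)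
  have A: "0 \<le> q0" "0 \<le> p0" "0 \<le> q1" "0 \<le> p1" "\<bar>q0*p1 - q1*p0\<bar> = 1" "s0 \<in> Qset"
    using d unfolding dec_def a b by (auto simp: Qset_mem)
  have det: "\<bar>q0*(p1-p0) - (q1-q0)*p0\<bar> = 1" using A(5) by (simp add: algebra_simps)
  have "coprime (q1-q0) (p1-p0)" by (rule coprime_det[OF det])
  then have "s1 - s0 \<in> Qset" using le a b by (simp add: Qset_mem)
  then show ?thesis using A det a b by (simp add: dec_def)
qed

lemma dec_size:
  assumes "dec \<sigma> a b"
  shows "fst a + snd a < fst \<sigma> + snd \<sigma>" "fst b + snd b < fst \<sigma> + snd \<sigma>"
proof -
  have "a \<in> Qset" "b \<in> Qset" "a + b = \<sigma>" using assms by (auto simp: dec_def)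
  then have "0 \<le> fst a" "0 \<le> snd a" "0 \<le> fst b" "0 \<le> snd b" "a \<noteq> (0,0)" "b \<noteq> (0,0)"
    "fst \<sigma> = fst a + fst b" "snd \<sigma> = snd a + snd b"
    using Qset_nonneg by auto
  then show "fst a + snd a < fst \<sigma> + snd \<sigma>" "fst b + snd b < fst \<sigma> + snd \<sigma>"
    by (auto simp: prod_eq_iff)
qed

lemma labeled_exists:
  assumes s: "\<sigma> \<in> Qset" "\<sigma> \<notin> {Qzero, Qone, Qinf}"
  shows "\<exists>s0 s1. dec \<sigma> s0 s1 \<and> dec s1 s0 (s1 - s0)"
proof -
  obtain a b where d: "dec \<sigma> a b" using dec_exists[OF s] by blast
  have "\<sigma> \<noteq> Qone" using s by auto
  from dominate[OF d this] show ?thesis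
  proof
    assume "fst a \<le> fst b \<and> snd a \<le> snd b"
    then show ?thesis using d dec_child[OF d] by blast
  next
    assume "fst b \<le> fst a \<and> snd b \<le> snd a"
    then show ?thesis using dec_sym[OF d] dec_child[OF dec_sym[OF d]] by blast
  qed
qed

lemma isF_exists: "\<sigma> \<in> Qset \<Longrightarrow> \<exists>f. isF \<sigma> f"
proof (induction "nat (fst \<sigma> + snd \<sigma>)" arbitrary: \<sigma> rule: less_induct)
  case less
  show ?case
  proof (cases "\<sigma> \<in> {Qzero, Qone, Qinf}")
    case True then show ?thesis using isF.base by blast
  next
    case False
    obtain s0 s1 where d: "dec \<sigma> s0 s1" "dec s1 s0 (s1 - s0)" using labeled_exists[OF less.prems False] by blast
    have Q: "s0 \<in> Qset" "s1 \<in> Qset" "s1 - s0 \<in> Qset" using d by (auto simp: dec_def)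
    have sz: "nat (fst s0 + snd s0) < nat (fst \<sigma> + snd \<sigma>)" "nat (fst s1 + snd s1) < nat (fst \<sigma> + snd \<sigma>)"
      "nat (fst (s1 - s0) + snd (s1 - s0)) < nat (fst \<sigma> + snd \<sigma>)"
      using dec_size[OF d(1)] dec_size[OF d(2)] Qset_nonneg[OF Q(1)] Qset_nonneg[OF Q(3)] by auto
    obtain f0 f1 f' where f: "isF s0 f0" "isF s1 f1" "isF (s1 - s0) f'"
      using less.hyps[OF sz(1) Q(1)] less.hyps[OF sz(2) Q(2)] less.hyps[OF sz(3) Q(3)] by blast
    have "is_parents \<sigma> s0 s1" "is_parents s1 s0 (s1 - s0)" using parents_iff less.prems Q d by auto
    then show ?thesis using isF.step[OF less.prems False _ _ f] by blast
  qed
qed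

lemma F_isF: "\<sigma> \<in> Qset \<Longrightarrow> isF \<sigma> (F \<sigma>)"
  unfolding F_def using isF_exists isF_unique by (metis theI)

lemma F_base: "\<sigma> \<in> {Qzero, Qone, Qinf} \<Longrightarrow> F \<sigma> = ind (J \<sigma>)"
  using F_isF[of \<sigma>] base_Qset isF.base isF_unique by blast

lemma F_step:
  assumes "\<sigma> \<in> Qset" "\<sigma> \<notin> {Qzero, Qone, Qinf}" "dec \<sigma> s0 s1" "dec s1 s0 s'"
  shows "F \<sigma> = (\<lambda>u. conv (conv (F s0) (F s1)) (ind Lambda) u - F s' u)"
proof -
  have Q: "s0 \<in> Qset" "s1 \<in> Qset" "s' \<in> Qset" using assms by (auto simp: dec_def)
  have "is_parents \<sigma> s0 s1" "is_parents s1 s0 s'" using parents_iff assms Q by auto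
  then have "isF \<sigma> (\<lambda>u. conv (conv (F s0) (F s1)) (ind Lambda) u - F s' u)"
    using isF.step[OF assms(1,2) _ _ F_isF[OF Q(1)] F_isF[OF Q(2)] F_isF[OF Q(3)]] by blast
  then show ?thesis using F_isF[OF assms(1)] isF_unique by blast
qed



definition ori :: "int \<times> int \<Rightarrow> int \<times> int \<Rightarrow> int" where
  "ori s0 s1 = fst s1 * snd s0 - fst s0 * snd s1"
definition AP :: "int \<times> int \<Rightarrow> int \<Rightarrow> int \<times> int" where
  "AP s e = (if e = 1 then Ppt s 0 else Qpt s 0)"
definition BP :: "int \<times> int \<Rightarrow> int \<Rightarrow> int \<times> int" where
  "BP s e = (if e = 1 then Qpt s 0 else Ppt s 0)"

definition Ineq :: "int \<times> int \<Rightarrow> int \<times> int \<Rightarrow> int \<times> int \<Rightarrow> bool" where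
  "Ineq \<sigma> s0 s1 \<longleftrightarrow> (\<forall>u. F s1 (u - BP s0 (ori s0 s1)) \<le> F \<sigma> u \<and> F s0 (u - AP s1 (ori s0 s1)) \<le> F \<sigma> u \<and>
     (u \<noteq> AP s0 (ori s0 s1) + BP s1 (ori s0 s1) \<longrightarrow>
        F s1 (u - AP s0 (ori s0 s1)) \<le> F \<sigma> u \<and> F s0 (u - BP s1 (ori s0 s1)) \<le> F \<sigma> u))"

lemma ori_dec: "dec \<sigma> s0 s1 \<Longrightarrow> ori s0 s1 = 1 \<or> ori s0 s1 = -1"
  unfolding dec_def ori_def by auto

lemma Ineq_sym:
  assumes "dec \<sigma> s0 s1" "Ineq \<sigma> s0 s1" shows "Ineq \<sigma> s1 s0"
proof -
  have o: "ori s1 s0 = - ori s0 s1" by (simp add: ori_def)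
  from ori_dec[OF assms(1)] show ?thesis
  proof
    assume e: "ori s0 s1 = 1"
    then show ?thesis using assms(2) o unfolding Ineq_def AP_def BP_def by (auto simp: add.commute)
  next
    assume e: "ori s0 s1 = -1"
    then show ?thesis using assms(2) o unfolding Ineq_def AP_def BP_def by (auto simp: add.commute)
  qed
qed

lemma AStep:
  fixes f0 f1 f' S f :: "int \<times> int \<Rightarrow> int" and A0 B0 A1 B1 A' B' :: "int \<times> int"
  assumes r: "A0 + B0 = 0" "A1 = A0 + A'" "B1 = B0 + B'"
    and H1: "\<And>u. f1 (u - A0) + f1 (u - B0) \<le> S u"
    and H2: "\<And>v. f' (v - B0) \<le> f1 v \<and> f0 (v - A') \<le> f1 v \<and>
               (v \<noteq> A0 + B' \<longrightarrow> f' (v - A0) \<le> f1 v \<and> f0 (v - B') \<le> f1 v)"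
    and H3: "f0 (A0 + B1 - A1) \<le> f (A0 + B1)"
    and fdef: "\<And>u. f u = S u - f' u"
  shows "f1 (u - B0) \<le> f u \<and> f0 (u - A1) \<le> f u \<and> (u \<noteq> A0 + B1 \<longrightarrow> f1 (u - A0) \<le> f u \<and> f0 (u - B1) \<le> f u)"
proof -
  have e1: "u - A0 - B0 = u" "u - B0 - A0 = u" using r(1) by (simp_all add: algebra_simps)
  have e2: "u - A0 - A' = u - A1" "u - B0 - B' = u - B1" using r by (simp_all add: algebra_simps)
  have e3: "(u - B0 \<noteq> A0 + B') = (u \<noteq> A0 + B1)"
  proof -
    have "u - B0 = A0 + B' \<longleftrightarrow> u = A0 + B1" using r by (auto simp: algebra_simps)
    then show ?thesis by simp
  qed
  have ga: "f' u \<le> f1 (u - A0)" "f0 (u - A1) \<le> f1 (u - A0)" using H2[of "u - A0"] e1 e2 by auto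
  have gb: "u \<noteq> A0 + B1 \<Longrightarrow> f' u \<le> f1 (u - B0) \<and> f0 (u - B1) \<le> f1 (u - B0)"
    using H2[of "u - B0"] e1 e2 e3 by auto
  have s: "f1 (u - A0) + f1 (u - B0) \<le> S u" by (rule H1)
  have i2: "f1 (u - B0) \<le> f u" using ga s fdef[of u] by linarith
  have i3: "f0 (u - A1) \<le> f u"
  proof (cases "u = A0 + B1")
    case True then show ?thesis using H3 by simp
  next
    case False then show ?thesis using ga gb s fdef[of u] by fastforce
  qed
  have i14: "u \<noteq> A0 + B1 \<longrightarrow> f1 (u - A0) \<le> f u \<and> f0 (u - B1) \<le> f u"
    using ga gb s fdef[of u] by fastforce
  show ?thesis using i2 i3 i14 by blast
qed

lemma P_in_J: "0 \<le> q \<Longrightarrow> 1 \<le> p \<Longrightarrow> Ppt (q,p) 0 \<in> J (q,p)"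
proof -
  assume "0 \<le> q" "1 \<le> p"
  moreover have "(-p) mod 2 = p mod 2" by presburger
  ultimately show ?thesis by (simp add: Ppt_def J_mem algebra_simps)
qed

lemma Q_in_J: "1 \<le> q \<Longrightarrow> 0 \<le> p \<Longrightarrow> Qpt (q,p) 0 \<in> J (q,p)"
proof -
  assume "1 \<le> q" "0 \<le> p"
  moreover have "(-q) mod 2 = q mod 2" by presburger
  ultimately show ?thesis by (simp add: Qpt_def J_mem algebra_simps)
qed


lemma GeoPack:
  assumes d: "dec \<sigma> s0 s1"
  shows "\<forall>x y l. x \<in> J s0 \<longrightarrow> y \<in> J s1 \<longrightarrow> l \<in> Lambda \<longrightarrow> x + y + l \<notin> J \<sigma> \<longrightarrow>
            x = AP s0 (ori s0 s1) \<and> y = BP s1 (ori s0 s1) \<and> l = 0"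
    and "\<forall>u\<in>J \<sigma>. \<exists>x\<in>J s0. \<exists>l\<in>Lambda. u - l - x \<in> J s1"
    and "AP s0 (ori s0 s1) + BP s1 (ori s0 s1) - AP s1 (ori s0 s1) \<notin> J s0"
    and "AP s0 (ori s0 s1) + BP s1 (ori s0 s1) \<notin> J \<sigma>"
    and "AP s0 (ori s0 s1) \<in> J s0" "BP s1 (ori s0 s1) \<in> J s1"
proof -
  obtain q0 p0 where a: "s0 = (q0,p0)" by (cases s0)
  obtain q1 p1 where b: "s1 = (q1,p1)" by (cases s1)
  have sg: "\<sigma> = (q0 + q1, p0 + p1)" using d a b by (auto simp: dec_def)
  have Q: "(q0,p0) \<in> Qset" "(q1,p1) \<in> Qset" using d a b by (auto simp: dec_def)
  have nn: "0 \<le> q0" "0 \<le> p0" "0 \<le> q1" "0 \<le> p1" using Q Qset_nonneg by fastforce+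
  have o: "ori s0 s1 = q1*p0 - q0*p1" by (simp add: ori_def a b)
  have eo: "ori s0 s1 = 1 \<or> ori s0 s1 = -1" using ori_dec[OF d] .
  show "\<forall>x y l. x \<in> J s0 \<longrightarrow> y \<in> J s1 \<longrightarrow> l \<in> Lambda \<longrightarrow> x + y + l \<notin> J \<sigma> \<longrightarrow>
            x = AP s0 (ori s0 s1) \<and> y = BP s1 (ori s0 s1) \<and> l = 0"
  proof (intro allI impI)
    fix x y l assume h: "x \<in> J s0" "y \<in> J s1" "l \<in> Lambda" "x + y + l \<notin> J \<sigma>"
    obtain a0 b0 where x: "x = (a0,b0)" by (cases x)
    obtain a1 b1 where y: "y = (a1,b1)" by (cases y)
    obtain l1 l2 where l: "l = (l1,l2)" by (cases l)
    from eo show "x = AP s0 (ori s0 s1) \<and> y = BP s1 (ori s0 s1) \<and> l = 0"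
    proof
      assume e: "ori s0 s1 = 1"
      have "a0 = q0 \<and> b0 = -p0 \<and> a1 = -q1 \<and> b1 = p1 \<and> l1 = 0 \<and> l2 = 0"
        by (rule G1[OF _ nn]) (use e o h x y l a b sg in auto)
      then show ?thesis using e x y l by (simp add: AP_def BP_def a b Ppt_def Qpt_def zero_prod_def)
    next
      assume e: "ori s0 s1 = -1"
      have "b0 = p0 \<and> a0 = -q0 \<and> b1 = -p1 \<and> a1 = q1 \<and> l2 = 0 \<and> l1 = 0"
      proof (rule G1[OF _ nn(2,1,4,3)])
        show "p1 * q0 - p0 * q1 = 1" using e o by (simp add: algebra_simps)
        show "(b0, a0) \<in> J (p0, q0)" using h x a by (simp add: J_swap[symmetric])
        show "(b1, a1) \<in> J (p1, q1)" using h y b by (simp add: J_swap[symmetric])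
        show "(l2, l1) \<in> Lambda" using h l by (auto simp: Lambda_def)
        show "(b0 + b1 + l2, a0 + a1 + l1) \<notin> J (p0 + p1, q0 + q1)" using h x y l sg by (simp add: J_swap[symmetric] add.commute)
      qed
      then show ?thesis using e x y l by (simp add: AP_def BP_def a b Ppt_def Qpt_def zero_prod_def)
    qed
  qed
  show "\<forall>u\<in>J \<sigma>. \<exists>x\<in>J s0. \<exists>l\<in>Lambda. u - l - x \<in> J s1"
  proof
    fix u assume u: "u \<in> J \<sigma>"
    from eo show "\<exists>x\<in>J s0. \<exists>l\<in>Lambda. u - l - x \<in> J s1"
    proof
      assume e: "ori s0 s1 = 1"
      show ?thesis using sumset[of q1 p0 q0 p1 u] e o nn u a b sg by auto
    next
      assume e: "ori s0 s1 = -1"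
      have "\<exists>x\<in>J (p0,q0). \<exists>l\<in>Lambda. sw u - l - x \<in> J (p1,q1)"
        by (rule sumset) (use e o nn u sg sw_J[of u "p0+p1" "q0+q1"] in \<open>auto simp: algebra_simps\<close>)
      then obtain x' l' where xl: "x' \<in> J (p0,q0)" "l' \<in> Lambda" "sw u - l' - x' \<in> J (p1,q1)" by blast
      have "sw x' \<in> J s0" using xl(1) sw_J[of "sw x'" p0 q0] a by simp
      moreover have "sw l' \<in> Lambda" using xl(2) sw_Lambda[of "sw l'"] by simp
      moreover have "u - sw l' - sw x' \<in> J s1"
        using xl(3) sw_J[of "u - sw l' - sw x'" p1 q1] b by (simp add: sw_diff)
      ultimately show ?thesis by blast
    qed
  qed
  from eo have "(AP s0 (ori s0 s1) + BP s1 (ori s0 s1) - AP s1 (ori s0 s1) \<notin> J s0) \<and>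
    (AP s0 (ori s0 s1) + BP s1 (ori s0 s1) \<notin> J \<sigma>) \<and> AP s0 (ori s0 s1) \<in> J s0 \<and> BP s1 (ori s0 s1) \<in> J s1"
  proof
    assume e: "ori s0 s1 = 1"
    then have c: "q1*p0 - q0*p1 = 1" using o by simp
    have p0: "1 \<le> p0" using c nn by (smt (verit) mult_nonneg_nonneg mult_eq_0_iff)
    have q1: "1 \<le> q1" using c nn by (smt (verit) mult_nonneg_nonneg mult_eq_0_iff)
    have w1: "p0*(q0 - 2*q1) + q0*(2*p1 - p0) < 0" using c by (simp add: algebra_simps)
    have w2: "(p0+p1)*(q0 - q1) + (q0+q1)*(p1 - p0) < 0" using c by (simp add: algebra_simps)
    show ?thesis using e w1 w2 P_in_J[of q0 p0] Q_in_J[of q1 p1] p0 q1 nn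
      by (simp add: AP_def BP_def a b sg Ppt_def Qpt_def J_mem algebra_simps)
  next
    assume e: "ori s0 s1 = -1"
    then have c: "q0*p1 - q1*p0 = 1" using o by simp
    have q0: "1 \<le> q0" using c nn by (smt (verit) mult_nonneg_nonneg mult_eq_0_iff)
    have p1: "1 \<le> p1" using c nn by (smt (verit) mult_nonneg_nonneg mult_eq_0_iff)
    have w1: "p0*(2*q1 - q0) + q0*(p0 - 2*p1) < 0" using c by (simp add: algebra_simps)
    have w2: "(p0+p1)*(q1 - q0) + (q0+q1)*(p0 - p1) < 0" using c by (simp add: algebra_simps)
    show ?thesis using e w1 w2 Q_in_J[of q0 p0] P_in_J[of q1 p1] q0 p1 nn
      by (simp add: AP_def BP_def a b sg Ppt_def Qpt_def J_mem algebra_simps)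
  qed
  then show "AP s0 (ori s0 s1) + BP s1 (ori s0 s1) - AP s1 (ori s0 s1) \<notin> J s0"
    "AP s0 (ori s0 s1) + BP s1 (ori s0 s1) \<notin> J \<sigma>" "AP s0 (ori s0 s1) \<in> J s0" "BP s1 (ori s0 s1) \<in> J s1"
    by blast+
qed

lemma GeoChild:
  assumes d0: "dec \<sigma> s0 s1" and d1: "dec s1 s0 s'"
  shows "ori s0 s' = ori s0 s1" "AP s0 (ori s0 s1) + BP s1 (ori s0 s1) = BP s' (ori s0 s1)"
    "BP s' (ori s0 s1) \<in> J s'" "Ppt \<sigma> 0 \<notin> J s'" "Qpt \<sigma> 0 \<notin> J s'"
    "AP s1 (ori s0 s1) = AP s0 (ori s0 s1) + AP s' (ori s0 s1)"
    "BP s1 (ori s0 s1) = BP s0 (ori s0 s1) + BP s' (ori s0 s1)"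
    "AP s0 (ori s0 s1) + BP s0 (ori s0 s1) = 0"
proof -
  obtain q0 p0 where a: "s0 = (q0,p0)" by (cases s0)
  obtain q' p' where b: "s' = (q',p')" by (cases s')
  have s1: "s1 = (q0 + q', p0 + p')" using d1 a b by (auto simp: dec_def)
  have sg: "\<sigma> = (2*q0 + q', 2*p0 + p')" using d0 s1 a by (auto simp: dec_def)
  have Q0: "s0 \<in> Qset" "s' \<in> Qset" using d1 by (auto simp: dec_def)
  have nn: "0 \<le> q0" "0 \<le> p0" "0 \<le> q'" "0 \<le> p'" using Q0 a b Qset_nonneg by fastforce+
  have det: "\<bar>q0*p' - q'*p0\<bar> = 1" using d1 a b by (simp add: dec_def)
  have o: "ori s0 s1 = q'*p0 - q0*p'" by (simp add: ori_def a s1 algebra_simps)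
  show "ori s0 s' = ori s0 s1" using o by (simp add: ori_def a b)
  have eo: "ori s0 s1 = 1 \<or> ori s0 s1 = -1" using o det by linarith
  show "AP s0 (ori s0 s1) + BP s1 (ori s0 s1) = BP s' (ori s0 s1)"
    using eo by (auto simp: AP_def BP_def a b s1 Ppt_def Qpt_def)
  show "AP s1 (ori s0 s1) = AP s0 (ori s0 s1) + AP s' (ori s0 s1)"
    using eo by (auto simp: AP_def a b s1 Ppt_def Qpt_def)
  show "BP s1 (ori s0 s1) = BP s0 (ori s0 s1) + BP s' (ori s0 s1)"
    using eo by (auto simp: BP_def a b s1 Ppt_def Qpt_def)
  show "AP s0 (ori s0 s1) + BP s0 (ori s0 s1) = 0"
    using eo by (auto simp: AP_def BP_def a Ppt_def Qpt_def zero_prod_def)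
  show "BP s' (ori s0 s1) \<in> J s'"
  proof (cases "ori s0 s1 = 1")
    case True
    then have "q'*p0 = 1 + q0*p'" using o by simp
    moreover have "0 \<le> q0*p'" using nn by simp
    ultimately have "1 \<le> q'" using nn by (smt (verit) mult_eq_0_iff mult_nonneg_nonneg)
    then show ?thesis using True Q_in_J[of q' p'] nn b by (simp add: BP_def)
  next
    case False
    then have F: "ori s0 s1 = -1" using eo by simp
    then have "q0*p' = 1 + q'*p0" using o by simp
    moreover have "0 \<le> q'*p0" using nn by simp
    ultimately have "1 \<le> p'" using nn by (smt (verit) mult_eq_0_iff mult_nonneg_nonneg)
    then show ?thesis using F P_in_J[of q' p'] nn b by (simp add: BP_def)
  qed
  show "Ppt \<sigma> 0 \<notin> J s'"
  proof
    assume "Ppt \<sigma> 0 \<in> J s'"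
    then have h: "-p' \<le> -(2*p0+p')" "(2*q0+q') - (2*p0+p') \<le> p' + q' - 2" using sg b by (auto simp: Ppt_def J_mem)
    then have "p0 = 0" using nn by simp
    then have "q0 = 1" using Q0 a Qset_p0 by simp
    then have "p' = 1" using det \<open>p0 = 0\<close> nn by simp
    then show False using h \<open>p0 = 0\<close> \<open>q0 = 1\<close> by simp
  qed
  show "Qpt \<sigma> 0 \<notin> J s'"
  proof
    assume "Qpt \<sigma> 0 \<in> J s'"
    then have h: "-q' \<le> -(2*q0+q')" "-(2*q0+q') + (2*p0+p') \<le> p' + q' - 2" using sg b by (auto simp: Qpt_def J_mem)
    then have "q0 = 0" using nn by simp
    then have "p0 = 1" using Q0 a Qset_q0 by simp
    then have "q' = 1" using det \<open>q0 = 0\<close> nn by simp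
    then show False using h \<open>p0 = 1\<close> \<open>q0 = 0\<close> by simp
  qed
qed

lemma cornerQ:
  fixes q0 p0 q1 p1 a0 b0 a1 b1 l1 l2 :: int
  assumes det: "\<bar>q0*p1 - q1*p0\<bar> = 1" and nn: "0 \<le> q0" "0 \<le> p0" "0 \<le> q1" "0 \<le> p1"
    and x: "(a0,b0) \<in> J (q0,p0)" and y: "(a1,b1) \<in> J (q1,p1)" and l: "(l1,l2) \<in> Lambda"
    and s: "a0 + a1 + l1 = -(q0 + q1)" "b0 + b1 + l2 = p0 + p1"
  shows "(a0, b0) = (if q0 = 0 then (q0, -p0) else (-q0, p0)) \<and> (l1, l2) = (if q0 = 0 \<or> q1 = 0 then (0,2) else (0,0))"
proof -
  have det': "\<bar>p0*q1 - p1*q0\<bar> = 1" using det by (simp add: abs_minus_commute algebra_simps)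
  have l': "(l2,l1) \<in> Lambda" using l by (auto simp: Lambda_def)
  have "(b0, a0) = (if q0 = 0 then (-p0, q0) else (p0, -q0)) \<and> (l2, l1) = (if q0 = 0 \<or> q1 = 0 then (2,0) else (0,0))"
    by (rule cornerP[OF det' nn(2,1,4,3) _ _ l']) (use x y s in \<open>simp_all add: J_swap[of a0] J_swap[of a1]\<close>)
  then show ?thesis by (auto split: if_splits)
qed

lemma CornerPack:
  assumes d: "dec \<sigma> s0 s1" and CC: "C = Ppt \<sigma> 0 \<or> C = Qpt \<sigma> 0"
  shows "\<exists>l x. l \<in> Lambda \<and> x \<in> J s0 \<and> x \<in> {Ppt s0 0, Qpt s0 0} \<and> C - l - x \<in> J s1 \<and>
      C - l - x \<in> {Ppt s1 0, Qpt s1 0} \<and>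
      (\<forall>l' x'. l' \<in> Lambda \<longrightarrow> x' \<in> J s0 \<longrightarrow> C - l' - x' \<in> J s1 \<longrightarrow> l' = l \<and> x' = x)"
proof -
  obtain q0 p0 where a: "s0 = (q0,p0)" by (cases s0)
  obtain q1 p1 where b: "s1 = (q1,p1)" by (cases s1)
  have sg: "\<sigma> = (q0 + q1, p0 + p1)" using d a b by (auto simp: dec_def)
  have Q: "(q0,p0) \<in> Qset" "(q1,p1) \<in> Qset" using d a b by (auto simp: dec_def)
  have nn: "0 \<le> q0" "0 \<le> p0" "0 \<le> q1" "0 \<le> p1" using Q Qset_nonneg by fastforce+
  have det: "\<bar>q0*p1 - q1*p0\<bar> = 1" using d a b by (simp add: dec_def)
  from CC show ?thesis
  proof
    assume C: "C = Ppt \<sigma> 0"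
    define x where "x = (if p0 = 0 then (-q0, p0) else (q0, -p0))"
    define l :: "int \<times> int" where "l = (if p0 = 0 \<or> p1 = 0 then (2,0) else (0,0))"
    have uniq: "\<forall>l' x'. l' \<in> Lambda \<longrightarrow> x' \<in> J s0 \<longrightarrow> C - l' - x' \<in> J s1 \<longrightarrow> l' = l \<and> x' = x"
    proof (intro allI impI)
      fix l' x' assume h: "l' \<in> Lambda" "x' \<in> J s0" "C - l' - x' \<in> J s1"
      obtain l1 l2 where l': "l' = (l1,l2)" by (cases l')
      obtain a0 b0 where x': "x' = (a0,b0)" by (cases x')
      obtain a1 b1 where y': "C - l' - x' = (a1,b1)" by (cases "C - l' - x'")
      have sums: "a0 + a1 + l1 = q0 + q1" "b0 + b1 + l2 = -(p0 + p1)"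
        using y' C sg l' x' by (auto simp: Ppt_def prod_eq_iff)
      have "(a0, b0) = x \<and> (l1, l2) = l"
        unfolding x_def l_def by (rule cornerP[OF det nn _ _ _ sums]) (use h a b l' x' y' in auto)
      then show "l' = l \<and> x' = x" using l' x' by simp
    qed
    consider "p0 = 0" | "p1 = 0" | "1 \<le> p0" "1 \<le> p1" using nn by linarith
    then show ?thesis
    proof cases
      case 1
      then have "q0 = 1" using Q Qset_p0 by simp
      then have "p1 = 1" using det 1 nn by simp
      have ex: "l \<in> Lambda" "x \<in> J s0" "x \<in> {Ppt s0 0, Qpt s0 0}" "C - l - x \<in> J s1" "C - l - x \<in> {Ppt s1 0, Qpt s1 0}"
        using 1 \<open>q0 = 1\<close> \<open>p1 = 1\<close> Q_in_J[of 1 0] P_in_J[of q1 1] nn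
        by (auto simp: l_def x_def a b C sg Lambda_def Ppt_def Qpt_def)
      show ?thesis using ex uniq by blast
    next
      case 2
      then have "q1 = 1" using Q Qset_p0 by simp
      then have "p0 = 1" using det 2 nn by simp
      have ex: "l \<in> Lambda" "x \<in> J s0" "x \<in> {Ppt s0 0, Qpt s0 0}" "C - l - x \<in> J s1" "C - l - x \<in> {Ppt s1 0, Qpt s1 0}"
        using 2 \<open>q1 = 1\<close> \<open>p0 = 1\<close> Q_in_J[of 1 0] P_in_J[of q0 1] nn
        by (auto simp: l_def x_def a b C sg Lambda_def Ppt_def Qpt_def)
      show ?thesis using ex uniq by blast
    next
      case 3
      have ex: "l \<in> Lambda" "x \<in> J s0" "x \<in> {Ppt s0 0, Qpt s0 0}" "C - l - x \<in> J s1" "C - l - x \<in> {Ppt s1 0, Qpt s1 0}"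
        using 3 P_in_J[of q0 p0] P_in_J[of q1 p1] nn
        by (auto simp: l_def x_def a b C sg Lambda_def Ppt_def Qpt_def)
      show ?thesis using ex uniq by blast
    qed
  next
    assume C: "C = Qpt \<sigma> 0"
    define x where "x = (if q0 = 0 then (q0, -p0) else (-q0, p0))"
    define l :: "int \<times> int" where "l = (if q0 = 0 \<or> q1 = 0 then (0,2) else (0,0))"
    have uniq: "\<forall>l' x'. l' \<in> Lambda \<longrightarrow> x' \<in> J s0 \<longrightarrow> C - l' - x' \<in> J s1 \<longrightarrow> l' = l \<and> x' = x"
    proof (intro allI impI)
      fix l' x' assume h: "l' \<in> Lambda" "x' \<in> J s0" "C - l' - x' \<in> J s1"
      obtain l1 l2 where l': "l' = (l1,l2)" by (cases l')
      obtain a0 b0 where x': "x' = (a0,b0)" by (cases x')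
      obtain a1 b1 where y': "C - l' - x' = (a1,b1)" by (cases "C - l' - x'")
      have sums: "a0 + a1 + l1 = -(q0 + q1)" "b0 + b1 + l2 = p0 + p1"
        using y' C sg l' x' by (auto simp: Qpt_def prod_eq_iff)
      have "(a0, b0) = x \<and> (l1, l2) = l"
        unfolding x_def l_def by (rule cornerQ[OF det nn _ _ _ sums]) (use h a b l' x' y' in auto)
      then show "l' = l \<and> x' = x" using l' x' by simp
    qed
    consider "q0 = 0" | "q1 = 0" | "1 \<le> q0" "1 \<le> q1" using nn by linarith
    then show ?thesis
    proof cases
      case 1
      then have "p0 = 1" using Q Qset_q0 by simp
      then have "q1 = 1" using det 1 nn by simp
      have ex: "l \<in> Lambda" "x \<in> J s0" "x \<in> {Ppt s0 0, Qpt s0 0}" "C - l - x \<in> J s1" "C - l - x \<in> {Ppt s1 0, Qpt s1 0}"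
        using 1 \<open>p0 = 1\<close> \<open>q1 = 1\<close> P_in_J[of 0 1] Q_in_J[of 1 p1] nn
        by (auto simp: l_def x_def a b C sg Lambda_def Ppt_def Qpt_def)
      show ?thesis using ex uniq by blast
    next
      case 2
      then have "p1 = 1" using Q Qset_q0 by simp
      then have "q0 = 1" using det 2 nn by simp
      have ex: "l \<in> Lambda" "x \<in> J s0" "x \<in> {Ppt s0 0, Qpt s0 0}" "C - l - x \<in> J s1" "C - l - x \<in> {Ppt s1 0, Qpt s1 0}"
        using 2 \<open>p1 = 1\<close> \<open>q0 = 1\<close> P_in_J[of 0 1] Q_in_J[of 1 p0] nn
        by (auto simp: l_def x_def a b C sg Lambda_def Ppt_def Qpt_def)
      show ?thesis using ex uniq by blast
    next
      case 3
      have ex: "l \<in> Lambda" "x \<in> J s0" "x \<in> {Ppt s0 0, Qpt s0 0}" "C - l - x \<in> J s1" "C - l - x \<in> {Ppt s1 0, Qpt s1 0}"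
        using 3 Q_in_J[of q0 p0] Q_in_J[of q1 p1] nn
        by (auto simp: l_def x_def a b C sg Lambda_def Ppt_def Qpt_def)
      show ?thesis using ex uniq by blast
    qed
  qed
qed

lemma TwoIdx:
  assumes "s0 \<in> Qset"
  shows "\<exists>i1 i2. i1 \<in> Lambda \<times> J s0 \<and> i2 \<in> Lambda \<times> J s0 \<and> i1 \<noteq> i2 \<and>
     fst i1 + snd i1 = Ppt s0 0 \<and> fst i2 + snd i2 = Qpt s0 0 \<and>
     snd i1 \<in> {Ppt s0 0, Qpt s0 0} \<and> snd i2 \<in> {Ppt s0 0, Qpt s0 0}"
proof -
  obtain q p where s: "s0 = (q,p)" by (cases s0)
  from Qset_cases[OF assms[unfolded s]] show ?thesis
  proof (elim disjE conjE)
    assume "q = 1" "p = 0"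
    then have "Qpt s0 0 \<in> J s0" using Q_in_J[of 1 0] s by simp
    then show ?thesis using s \<open>q = 1\<close> \<open>p = 0\<close>
      by (intro exI[of _ "((2,0), Qpt s0 0)"] exI[of _ "((0,0), Qpt s0 0)"]) (auto simp: Lambda_def Ppt_def Qpt_def)
  next
    assume "q = 0" "p = 1"
    then have "Ppt s0 0 \<in> J s0" using P_in_J[of 0 1] s by simp
    then show ?thesis using s \<open>q = 0\<close> \<open>p = 1\<close>
      by (intro exI[of _ "((0,0), Ppt s0 0)"] exI[of _ "((0,2), Ppt s0 0)"]) (auto simp: Lambda_def Ppt_def Qpt_def)
  next
    assume "1 \<le> q" "1 \<le> p"
    then have "Ppt s0 0 \<in> J s0" "Qpt s0 0 \<in> J s0" using P_in_J Q_in_J s by auto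
    then show ?thesis using s \<open>1 \<le> q\<close>
      by (intro exI[of _ "((0,0), Ppt s0 0)"] exI[of _ "((0,0), Qpt s0 0)"]) (auto simp: Lambda_def Ppt_def Qpt_def)
  qed
qed

lemma ABPQ: "ori s0 s1 = 1 \<or> ori s0 s1 = -1 \<Longrightarrow>
   {AP s0 (ori s0 s1), BP s0 (ori s0 s1)} = {Ppt s0 0, Qpt s0 0}"
  unfolding AP_def BP_def by auto

definition Inv :: "int \<times> int \<Rightarrow> bool" where
  "Inv \<sigma> \<longleftrightarrow> (\<forall>u. F \<sigma> u \<noteq> 0 \<longrightarrow> u \<in> J \<sigma>) \<and> (\<forall>u\<in>J \<sigma>. 0 < F \<sigma> u) \<and>
     (\<forall>u\<in>J \<sigma>. u = Ppt \<sigma> 0 \<or> u = Qpt \<sigma> 0 \<longrightarrow> F \<sigma> u = 1) \<and>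
     (\<forall>s0 s1. dec \<sigma> s0 s1 \<longrightarrow> Ineq \<sigma> s0 s1)"

lemma Inv_nonneg: "Inv \<sigma> \<Longrightarrow> 0 \<le> F \<sigma> u"
  unfolding Inv_def by (metis less_imp_le order_refl)

lemma J01: "J (0,1) = {(0,-1)}"
proof -
  have "\<And>a b. (a,b) \<in> J (0,1) \<longleftrightarrow> a = 0 \<and> b = -1"
  proof
    fix a b :: int
    assume "(a,b) \<in> J (0,1)" then show "a = 0 \<and> b = -1" by (auto simp: J_mem)
  next
    fix a b :: int
    assume "a = 0 \<and> b = -1" then show "(a,b) \<in> J (0,1)" by (auto simp: J_mem)
  qed
  then show ?thesis by auto
qed

lemma J10: "J (1,0) = {(-1,0)}"
proof -
  have "\<And>a b. (a,b) \<in> J (1,0) \<longleftrightarrow> a = -1 \<and> b = 0"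
  proof
    fix a b :: int
    assume "(a,b) \<in> J (1,0)" then show "a = -1 \<and> b = 0" by (auto simp: J_mem)
  next
    fix a b :: int
    assume "a = -1 \<and> b = 0" then show "(a,b) \<in> J (1,0)" by (auto simp: J_mem)
  qed
  then show ?thesis by auto
qed

lemma J11: "J (1,1) = {(-1,1), (1,-1)}"
proof -
  have "\<And>a b. (a,b) \<in> J (1,1) \<longleftrightarrow> (a = -1 \<and> b = 1) \<or> (a = 1 \<and> b = -1)"
  proof
    fix a b :: int
    assume "(a,b) \<in> J (1,1)"
    then have h: "a mod 2 = 1" "-1 \<le> a" "-1 \<le> b" "a + b \<le> 0" "0 \<le> a + b" by (auto simp: J_mem)
    then have "b = -a" "a \<le> 1" by auto
    moreover have "a \<noteq> 0" using h(1) by auto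
    ultimately show "(a = -1 \<and> b = 1) \<or> (a = 1 \<and> b = -1)" using h(2) by auto
  next
    fix a b :: int
    assume "(a = -1 \<and> b = 1) \<or> (a = 1 \<and> b = -1)" then show "(a,b) \<in> J (1,1)" by (auto simp: J_mem)
  qed
  then show ?thesis by auto
qed

lemma Ineq_one: "Ineq Qone (0,1) (1,0)"
proof -
  have F0: "F (0,1) = ind {(0,-1)}" using F_base[of Qzero] J01 by (simp add: Qzero_def)
  have F1: "F (1,0) = ind {(-1,0)}" using F_base[of Qinf] J10 by (simp add: Qinf_def)
  have F2: "F Qone = ind {(-1,1), (1,-1)}" using F_base[of Qone] J11 by (simp add: Qone_def)
  have o: "ori (0,1) (1,0) = 1" by (simp add: ori_def)
  show ?thesis unfolding Ineq_def o AP_def BP_def F0 F1 F2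
    by (auto simp: ind_def Ppt_def Qpt_def)
qed

lemma Inv_base: "\<sigma> \<in> {Qzero, Qone, Qinf} \<Longrightarrow> Inv \<sigma>"
proof -
  assume s: "\<sigma> \<in> {Qzero, Qone, Qinf}"
  have F: "F \<sigma> = ind (J \<sigma>)" by (rule F_base[OF s])
  have Q: "\<sigma> \<in> Qset" using s base_Qset by auto
  have C4: "\<forall>s0 s1. dec \<sigma> s0 s1 \<longrightarrow> Ineq \<sigma> s0 s1"
  proof (intro allI impI)
    fix s0 s1 assume d: "dec \<sigma> s0 s1"
    then have "\<sigma> = Qone" using dec_Qset[OF d Q] s by auto
    then have "(s0 = (0,1) \<and> s1 = (1,0)) \<or> (s0 = (1,0) \<and> s1 = (0,1))" using dec_one d by simp
    then show "Ineq \<sigma> s0 s1"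
    proof
      assume "s0 = (0,1) \<and> s1 = (1,0)" then show ?thesis using Ineq_one \<open>\<sigma> = Qone\<close> by simp
    next
      assume h: "s0 = (1,0) \<and> s1 = (0,1)"
      have "dec Qone (0,1) (1,0)" using dec_sym d h \<open>\<sigma> = Qone\<close> by simp
      then show ?thesis using Ineq_sym[OF _ Ineq_one] h \<open>\<sigma> = Qone\<close> by simp
    qed
  qed
  show ?thesis unfolding Inv_def using C4 by (simp add: F ind_def)
qed

lemma Inv_step:
  assumes s: "\<sigma> \<in> Qset" "\<sigma> \<notin> {Qzero, Qone, Qinf}"
    and d: "dec \<sigma> s0 s1" "dec s1 s0 s'"
    and I: "Inv s0" "Inv s1" "Inv s'"
  shows "Inv \<sigma>"
proof -
  define e where "e = ori s0 s1"
  define A0 where "A0 = AP s0 e"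
  define B0 where "B0 = BP s0 e"
  define A1 where "A1 = AP s1 e"
  define B1 where "B1 = BP s1 e"
  define A' where "A' = AP s' e"
  define B' where "B' = BP s' e"
  define c where "c = A0 + B1"
  define f0 where "f0 = F s0"
  define f1 where "f1 = F s1"
  define f' where "f' = F s'"
  define S where "S = (\<lambda>u. conv (conv f0 f1) (ind Lambda) u)"
  have Fs: "\<And>u. F \<sigma> u = S u - f' u" using F_step[OF s d] by (simp add: S_def f0_def f1_def f'_def)
  have Q: "s0 \<in> Qset" "s1 \<in> Qset" "s' \<in> Qset" using d by (auto simp: dec_def)
  have supp0: "\<And>x. f0 x \<noteq> 0 \<Longrightarrow> x \<in> J s0" using I(1) unfolding Inv_def f0_def by blast
  have supp1: "\<And>x. f1 x \<noteq> 0 \<Longrightarrow> x \<in> J s1" using I(2) unfolding Inv_def f1_def by blast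
  have supp': "\<And>x. f' x \<noteq> 0 \<Longrightarrow> x \<in> J s'" using I(3) unfolding Inv_def f'_def by blast
  have pos0: "\<And>x. x \<in> J s0 \<Longrightarrow> 0 < f0 x" using I(1) unfolding Inv_def f0_def by blast
  have pos1: "\<And>x. x \<in> J s1 \<Longrightarrow> 0 < f1 x" using I(2) unfolding Inv_def f1_def by blast
  have nn0: "\<And>x. 0 \<le> f0 x" using Inv_nonneg[OF I(1)] by (simp add: f0_def)
  have nn1: "\<And>x. 0 \<le> f1 x" using Inv_nonneg[OF I(2)] by (simp add: f1_def)
  have nn': "\<And>x. 0 \<le> f' x" using Inv_nonneg[OF I(3)] by (simp add: f'_def)
  have cor0: "\<And>x. x \<in> J s0 \<Longrightarrow> x \<in> {Ppt s0 0, Qpt s0 0} \<Longrightarrow> f0 x = 1" using I(1) unfolding Inv_def f0_def by blast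
  have cor1: "\<And>x. x \<in> J s1 \<Longrightarrow> x \<in> {Ppt s1 0, Qpt s1 0} \<Longrightarrow> f1 x = 1" using I(2) unfolding Inv_def f1_def by blast
  have cor': "\<And>x. x \<in> J s' \<Longrightarrow> x \<in> {Ppt s' 0, Qpt s' 0} \<Longrightarrow> f' x = 1" using I(3) unfolding Inv_def f'_def by blast
  have fin1: "finite {x. f1 x \<noteq> 0}"
    by (rule finite_subset[OF _ finite_J[of s1]]) (use supp1 in blast)
  have Sig: "\<And>u. S u = (\<Sum>(l,x)\<in>Lambda \<times> J s0. f0 x * f1 (u - l - x))"
    unfolding S_def by (rule Sig_eq[OF finite_J]) (use supp0 fin1 in auto)
  have finLJ: "finite (Lambda \<times> J s0)" using finite_J by (simp add: Lambda_def)
  have nnterm: "\<And>u i. 0 \<le> (case i of (l,x) \<Rightarrow> f0 x * f1 (u - l - x))"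
    using nn0 nn1 by (auto split: prod.splits)
  have eo: "e = 1 \<or> e = -1" using ori_dec[OF d(1)] by (simp add: e_def)
  have G: "\<forall>x y l. x \<in> J s0 \<longrightarrow> y \<in> J s1 \<longrightarrow> l \<in> Lambda \<longrightarrow> x + y + l \<notin> J \<sigma> \<longrightarrow> x = A0 \<and> y = B1 \<and> l = 0"
    "\<forall>u\<in>J \<sigma>. \<exists>x\<in>J s0. \<exists>l\<in>Lambda. u - l - x \<in> J s1"
    "c - A1 \<notin> J s0" "c \<notin> J \<sigma>" "A0 \<in> J s0" "B1 \<in> J s1"
    using GeoPack[OF d(1)] unfolding A0_def B1_def A1_def c_def e_def by auto
  have GC: "ori s0 s' = e" "c = B'" "B' \<in> J s'" "Ppt \<sigma> 0 \<notin> J s'" "Qpt \<sigma> 0 \<notin> J s'"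
     "A1 = A0 + A'" "B1 = B0 + B'" "A0 + B0 = 0"
    using GeoChild[OF d] unfolding A0_def B1_def A1_def c_def e_def B'_def A'_def B0_def by auto
  have A0PQ: "{A0, B0} = {Ppt s0 0, Qpt s0 0}" using ABPQ[OF eo[unfolded e_def]] by (simp add: A0_def B0_def e_def)
  have B1PQ: "{A1, B1} = {Ppt s1 0, Qpt s1 0}" using ABPQ[of s1 s0] eo unfolding A1_def B1_def e_def ori_def
    by (auto simp: AP_def BP_def)
  have B'PQ: "B' \<in> {Ppt s' 0, Qpt s' 0}" by (auto simp: B'_def BP_def)
  have H1: "\<And>u. f1 (u - A0) + f1 (u - B0) \<le> S u"
  proof -
    fix u
    obtain i1 i2 where ii: "i1 \<in> Lambda \<times> J s0" "i2 \<in> Lambda \<times> J s0" "i1 \<noteq> i2"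
       "fst i1 + snd i1 = Ppt s0 0" "fst i2 + snd i2 = Qpt s0 0"
       "snd i1 \<in> {Ppt s0 0, Qpt s0 0}" "snd i2 \<in> {Ppt s0 0, Qpt s0 0}"
      using TwoIdx[OF Q(1)] by blast
    have v1: "(case i1 of (l,x) \<Rightarrow> f0 x * f1 (u - l - x)) = f1 (u - Ppt s0 0)"
    proof -
      obtain l x where lx: "i1 = (l,x)" by (cases i1)
      have "f0 x = 1" using ii(1,6) cor0 lx by auto
      moreover have "u - l - x = u - Ppt s0 0" using ii(4) lx by (metis diff_diff_eq fst_conv snd_conv)
      ultimately show ?thesis unfolding lx prod.case by (metis mult_1)
    qed
    have v2: "(case i2 of (l,x) \<Rightarrow> f0 x * f1 (u - l - x)) = f1 (u - Qpt s0 0)"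
    proof -
      obtain l x where lx: "i2 = (l,x)" by (cases i2)
      have "f0 x = 1" using ii(2,7) cor0 lx by auto
      moreover have "u - l - x = u - Qpt s0 0" using ii(5) lx by (metis diff_diff_eq fst_conv snd_conv)
      ultimately show ?thesis unfolding lx prod.case by (metis mult_1)
    qed
    have "f1 (u - Ppt s0 0) + f1 (u - Qpt s0 0) \<le> S u"
      unfolding Sig using sum_two_le[OF finLJ ii(1,2,3), of "\<lambda>i. case i of (l,x) \<Rightarrow> f0 x * f1 (u - l - x)"] v1 v2 nnterm
      by (simp add: case_prod_unfold)
    moreover have "f1 (u - A0) + f1 (u - B0) = f1 (u - Ppt s0 0) + f1 (u - Qpt s0 0)"
      using A0PQ by (auto simp: doubleton_eq_iff)
    ultimately show "f1 (u - A0) + f1 (u - B0) \<le> S u" by simp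
  qed
  have H2: "\<And>v. f' (v - B0) \<le> f1 v \<and> f0 (v - A') \<le> f1 v \<and>
               (v \<noteq> A0 + B' \<longrightarrow> f' (v - A0) \<le> f1 v \<and> f0 (v - B') \<le> f1 v)"
  proof -
    fix v
    have "Ineq s1 s0 s'" using I(2) d(2) unfolding Inv_def by blast
    then show "f' (v - B0) \<le> f1 v \<and> f0 (v - A') \<le> f1 v \<and>
               (v \<noteq> A0 + B' \<longrightarrow> f' (v - A0) \<le> f1 v \<and> f0 (v - B') \<le> f1 v)"
      unfolding Ineq_def GC(1) f0_def f1_def f'_def A0_def B0_def A'_def B'_def by blast
  qed
  have terms0: "\<And>u l x. f0 x * f1 (u - l - x) \<noteq> 0 \<Longrightarrow> x \<in> J s0 \<and> u - l - x \<in> J s1"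
    using supp0 supp1 by auto
  have decomp: "\<And>u l x. u \<notin> J \<sigma> \<Longrightarrow> l \<in> Lambda \<Longrightarrow> f0 x * f1 (u - l - x) \<noteq> 0 \<Longrightarrow> x = A0 \<and> l = 0 \<and> u = c"
  proof -
    fix u l x assume u: "u \<notin> J \<sigma>" and l: "l \<in> Lambda" and t: "f0 x * f1 (u - l - x) \<noteq> 0"
    have xy: "x \<in> J s0" "u - l - x \<in> J s1" using terms0[OF t] by auto
    have "x + (u - l - x) + l = u" by (simp add: algebra_simps)
    then have "x = A0 \<and> u - l - x = B1 \<and> l = 0" using G(1) xy l u by metis
    then show "x = A0 \<and> l = 0 \<and> u = c" by (auto simp: c_def algebra_simps)
  qed
  have Sc: "S c = 1"
  proof -
    have "S c = (case ((0,0), A0) of (l,x) \<Rightarrow> f0 x * f1 (c - l - x))"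
      unfolding Sig
    proof (rule sum_single_eq[OF finLJ])
      show "((0, 0), A0) \<in> Lambda \<times> J s0" using G(5) by (simp add: Lambda_def)
      fix i assume i: "i \<in> Lambda \<times> J s0" "i \<noteq> ((0, 0), A0)"
      obtain l x where lx: "i = (l,x)" by (cases i)
      show "(case i of (l, x) \<Rightarrow> f0 x * f1 (c - l - x)) = 0"
      proof (rule ccontr)
        assume "(case i of (l, x) \<Rightarrow> f0 x * f1 (c - l - x)) \<noteq> 0"
        then have "f0 x * f1 (c - l - x) \<noteq> 0" using lx by simp
        moreover have "l \<in> Lambda" using i lx by auto
        ultimately have "x = A0 \<and> l = 0" using decomp[OF G(4)] by blast
        then show False using i lx by (simp add: zero_prod_def)
      qed
    qed
    also have "\<dots> = f0 A0 * f1 B1" by (simp add: c_def flip: zero_prod_def)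
    also have "\<dots> = 1"
    proof -
      have "A0 \<in> {Ppt s0 0, Qpt s0 0}" "B1 \<in> {Ppt s1 0, Qpt s1 0}" using A0PQ B1PQ by blast+
      then show ?thesis using cor0[OF G(5)] cor1[OF G(6)] by simp
    qed
    finally show ?thesis .
  qed
  have Fc: "F \<sigma> c = 0"
  proof -
    have "f' c = 1" using cor'[OF GC(3) B'PQ] GC(2) by simp
    then show ?thesis using Fs Sc by simp
  qed
  have H3: "f0 (A0 + B1 - A1) \<le> F \<sigma> (A0 + B1)"
  proof -
    have "f0 (c - A1) = 0" using supp0 G(3) by blast
    then show ?thesis using Fc by (simp add: c_def)
  qed
  have ineq: "\<And>u. f1 (u - B0) \<le> F \<sigma> u \<and> f0 (u - A1) \<le> F \<sigma> u \<and> (u \<noteq> A0 + B1 \<longrightarrow> f1 (u - A0) \<le> F \<sigma> u \<and> f0 (u - B1) \<le> F \<sigma> u)"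
    by (rule AStep[OF GC(8,6,7) H1 H2 H3 Fs])
  have Ineq01: "Ineq \<sigma> s0 s1"
    unfolding Ineq_def using ineq unfolding f0_def f1_def A0_def B0_def A1_def B1_def e_def by blast
  have nnF: "\<And>u. 0 \<le> F \<sigma> u" using ineq nn1 by (meson order_trans)
  have C1: "\<forall>u. F \<sigma> u \<noteq> 0 \<longrightarrow> u \<in> J \<sigma>"
  proof (intro allI impI)
    fix u assume ne: "F \<sigma> u \<noteq> 0"
    show "u \<in> J \<sigma>"
    proof (rule ccontr)
      assume u: "u \<notin> J \<sigma>"
      have "u \<noteq> c" using ne Fc by auto
      have "S u = 0" unfolding Sig
      proof (rule sum.neutral, intro ballI)
        fix i assume i: "i \<in> Lambda \<times> J s0"
        obtain l x where lx: "i = (l,x)" by (cases i)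
        show "(case i of (l, x) \<Rightarrow> f0 x * f1 (u - l - x)) = 0"
        proof -
          have "l \<in> Lambda" using i lx by auto
          then have "f0 x * f1 (u - l - x) = 0" using decomp[OF u, of l x] \<open>u \<noteq> c\<close> by blast
          then show ?thesis using lx by simp
        qed
      qed
      then have "F \<sigma> u \<le> 0" using Fs nn' by (simp add: le_diff_eq)
      then show False using nnF[of u] ne by simp
    qed
  qed
  have C2: "\<forall>u\<in>J \<sigma>. 0 < F \<sigma> u"
  proof
    fix u assume u: "u \<in> J \<sigma>"
    have uc: "u \<noteq> c" using u G(4) by auto
    obtain x l where xl: "x \<in> J s0" "l \<in> Lambda" "u - l - x \<in> J s1" using G(2) u by blast
    have Spos: "0 < S u"
    proof -
      have "(case (l,x) of (l,x) \<Rightarrow> f0 x * f1 (u - l - x)) \<le> (\<Sum>i\<in>Lambda \<times> J s0. case i of (l,x) \<Rightarrow> f0 x * f1 (u - l - x))"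
        by (rule member_le_sum) (use xl nnterm finLJ in auto)
      then have "f0 x * f1 (u - l - x) \<le> S u" unfolding Sig by (simp add: case_prod_unfold)
      moreover have "0 < f0 x * f1 (u - l - x)" using pos0 pos1 xl by simp
      ultimately show ?thesis by simp
    qed
    have a: "f' u \<le> f1 (u - A0)" using H2[of "u - A0"] GC(8) by (simp add: algebra_simps)
    have b: "f' u \<le> f1 (u - B0)"
    proof -
      have "u - B0 \<noteq> A0 + B'" using uc GC(7) by (auto simp: c_def algebra_simps)
      then show ?thesis using H2[of "u - B0"] GC(8) by (simp add: algebra_simps)
    qed
    show "0 < F \<sigma> u" using Fs[of u] H1[of u] a b Spos nn' by linarith
  qed
  have C3: "\<forall>u\<in>J \<sigma>. u = Ppt \<sigma> 0 \<or> u = Qpt \<sigma> 0 \<longrightarrow> F \<sigma> u = 1"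
  proof (intro ballI impI)
    fix C assume "C \<in> J \<sigma>" and CC: "C = Ppt \<sigma> 0 \<or> C = Qpt \<sigma> 0"
    from CornerPack[OF d(1) CC] obtain l x where lxall: "l \<in> Lambda \<and> x \<in> J s0 \<and> x \<in> {Ppt s0 0, Qpt s0 0} \<and> C - l - x \<in> J s1 \<and>
      C - l - x \<in> {Ppt s1 0, Qpt s1 0} \<and>
      (\<forall>l' x'. l' \<in> Lambda \<longrightarrow> x' \<in> J s0 \<longrightarrow> C - l' - x' \<in> J s1 \<longrightarrow> l' = l \<and> x' = x)"
      by (elim exE)
    have lx: "l \<in> Lambda" "x \<in> J s0" "x \<in> {Ppt s0 0, Qpt s0 0}" "C - l - x \<in> J s1"
      "C - l - x \<in> {Ppt s1 0, Qpt s1 0}"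
      "\<forall>l' x'. l' \<in> Lambda \<longrightarrow> x' \<in> J s0 \<longrightarrow> C - l' - x' \<in> J s1 \<longrightarrow> l' = l \<and> x' = x"
      using lxall by blast+
    have "S C = (case (l,x) of (l,x) \<Rightarrow> f0 x * f1 (C - l - x))"
      unfolding Sig
    proof (rule sum_single_eq[OF finLJ])
      show "(l, x) \<in> Lambda \<times> J s0" using lx(1,2) by simp
      fix i assume i: "i \<in> Lambda \<times> J s0" "i \<noteq> (l, x)"
      obtain l' x' where lx': "i = (l',x')" by (cases i)
      show "(case i of (l, x) \<Rightarrow> f0 x * f1 (C - l - x)) = 0"
      proof (rule ccontr)
        assume "(case i of (l, x) \<Rightarrow> f0 x * f1 (C - l - x)) \<noteq> 0"
        then have "f0 x' * f1 (C - l' - x') \<noteq> 0" using lx' by simp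
        then have xx: "x' \<in> J s0 \<and> C - l' - x' \<in> J s1" by (rule terms0)
        moreover have "l' \<in> Lambda" using i lx' by auto
        ultimately have "l' = l \<and> x' = x" using lx(6) xx by blast
        then show False using i lx' by simp
      qed
    qed
    also have "\<dots> = 1" using cor0[OF lx(2,3)] cor1[OF lx(4,5)] by simp
    finally have "S C = 1" .
    moreover have "f' C = 0"
    proof (rule ccontr)
      assume "f' C \<noteq> 0"
      then have "C \<in> J s'" by (rule supp')
      then show False using GC(4,5) CC by auto
    qed
    ultimately show "F \<sigma> C = 1" using Fs by simp
  qed
  have C4: "\<forall>a b. dec \<sigma> a b \<longrightarrow> Ineq \<sigma> a b"
  proof (intro allI impI)
    fix a b assume "dec \<sigma> a b"
    then have "(a = s0 \<and> b = s1) \<or> (a = s1 \<and> b = s0)" using dec_unique[OF d(1) _ s(1)] by presburger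
    then show "Ineq \<sigma> a b" using Ineq01 Ineq_sym[OF d(1) Ineq01] by blast
  qed
  show ?thesis unfolding Inv_def using C1 C2 C3 C4 by blast
qed

lemma Inv_all: "\<sigma> \<in> Qset \<Longrightarrow> Inv \<sigma>"
proof (induction "nat (fst \<sigma> + snd \<sigma>)" arbitrary: \<sigma> rule: less_induct)
  case less
  show ?case
  proof (cases "\<sigma> \<in> {Qzero, Qone, Qinf}")
    case True then show ?thesis by (rule Inv_base)
  next
    case False
    obtain s0 s1 where d: "dec \<sigma> s0 s1" "dec s1 s0 (s1 - s0)" using labeled_exists[OF less.prems False] by blast
    have Q: "s0 \<in> Qset" "s1 \<in> Qset" "s1 - s0 \<in> Qset" using d by (auto simp: dec_def)
    have sz: "nat (fst s0 + snd s0) < nat (fst \<sigma> + snd \<sigma>)" "nat (fst s1 + snd s1) < nat (fst \<sigma> + snd \<sigma>)"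
      "nat (fst (s1 - s0) + snd (s1 - s0)) < nat (fst \<sigma> + snd \<sigma>)"
      using dec_size[OF d(1)] dec_size[OF d(2)] Qset_nonneg[OF Q(1)] Qset_nonneg[OF Q(3)] by auto
    show ?thesis
      by (rule Inv_step[OF less.prems False d less.hyps[OF sz(1) Q(1)] less.hyps[OF sz(2) Q(2)] less.hyps[OF sz(3) Q(3)]])
  qed
qed



theorem lemma9:
  shows "(\<forall>s\<in>Qset. \<forall>u\<in>J s. 0 < F s u) \<and>
         (\<forall>s s0 s1. s \<in> Qset \<and> s \<notin> {Qzero, Qinf} \<and> is_parents s s0 s1 \<longrightarrow>
            (\<forall>u. ind (J s) u *
                   max (max (conv (ind {Ppt s0 0}) (F s1) u) (conv (ind {Ppt s1 0}) (F s0) u))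
                       (max (conv (ind {Qpt s0 0}) (F s1) u) (conv (ind {Qpt s1 0}) (F s0) u))
                 \<le> F s u))"
proof (intro conjI ballI allI impI)
  fix s u assume "s \<in> Qset" "u \<in> J s"
  then show "0 < F s u" using Inv_all unfolding Inv_def by blast
next
  fix s s0 s1 u
  assume h: "s \<in> Qset \<and> s \<notin> {Qzero, Qinf} \<and> is_parents s s0 s1"
  have I: "Inv s" using h Inv_all by blast
  have d: "dec s s0 s1" using h parents_iff by blast
  have ineq: "Ineq s s0 s1" using I d unfolding Inv_def by blast
  have nn: "0 \<le> F s u" using Inv_nonneg[OF I] .
  show "ind (J s) u * max (max (conv (ind {Ppt s0 0}) (F s1) u) (conv (ind {Ppt s1 0}) (F s0) u))
                       (max (conv (ind {Qpt s0 0}) (F s1) u) (conv (ind {Qpt s1 0}) (F s0) u)) \<le> F s u"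
  proof (cases "u \<in> J s")
    case False then show ?thesis using nn by (simp add: ind_def)
  next
    case True
    have uc: "u \<noteq> AP s0 (ori s0 s1) + BP s1 (ori s0 s1)" using GeoPack(4)[OF d] True by auto
    have four: "F s1 (u - Ppt s0 0) \<le> F s u" "F s0 (u - Ppt s1 0) \<le> F s u"
       "F s1 (u - Qpt s0 0) \<le> F s u" "F s0 (u - Qpt s1 0) \<le> F s u"
    proof -
      have iu: "F s1 (u - BP s0 (ori s0 s1)) \<le> F s u \<and> F s0 (u - AP s1 (ori s0 s1)) \<le> F s u \<and>
        (u \<noteq> AP s0 (ori s0 s1) + BP s1 (ori s0 s1) \<longrightarrow>
          F s1 (u - AP s0 (ori s0 s1)) \<le> F s u \<and> F s0 (u - BP s1 (ori s0 s1)) \<le> F s u)"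
        using ineq unfolding Ineq_def by blast
      then have iu2: "F s1 (u - BP s0 (ori s0 s1)) \<le> F s u" "F s0 (u - AP s1 (ori s0 s1)) \<le> F s u"
        "F s1 (u - AP s0 (ori s0 s1)) \<le> F s u" "F s0 (u - BP s1 (ori s0 s1)) \<le> F s u" using uc by blast+
      from ori_dec[OF d] show "F s1 (u - Ppt s0 0) \<le> F s u" "F s0 (u - Ppt s1 0) \<le> F s u"
       "F s1 (u - Qpt s0 0) \<le> F s u" "F s0 (u - Qpt s1 0) \<le> F s u"
        using iu2 unfolding AP_def BP_def by (auto split: if_splits)
    qed
    show ?thesis using True four by (simp add: ind_def conv_single)
  qed
qed


end
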